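(* For each prime number $p$, there are at least $p^2$ indecomposable and pairwise nonisomorphic metabelian groups of order $p^{41}$.
   Context: A group is metabelian if its commutator subgroup is contained in its center. A group is indecomposable if it is nontrivial and not a direct product of two nontrivial subgroups. *)

theory Defs
  imports "HOL-Algebra.Algebra"
begin

definition center :: "('a, 'b) monoid_scheme \<Rightarrow> 'a set" where
  "center G = {z \<in> carrier G. \<forall>x \<in> carrier G. z \<otimes>\<^bsub>G\<^esub> x = x \<otimes>\<^bsub>G\<^esub> z}"

definition metabelian :: "('a, 'b) monoid_scheme \<Rightarrow> bool" where
  "metabelian G \<longleftrightarrow> derived G (carrier G) \<subseteq> center G"

definition indecomposable :: "('a, 'b) monoid_scheme \<Rightarrow> bool" where
  "indecomposable G \<longleftrightarrow> carrier G \<noteq> {\<one>\<^bsub>G\<^esub>} \<and>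
     \<not> (\<exists>H K. H \<lhd> G \<and> K \<lhd> G \<and> H \<inter> K = {\<one>\<^bsub>G\<^esub>} \<and> H <#>\<^bsub>G\<^esub> K = carrier G
            \<and> H \<noteq> {\<one>\<^bsub>G\<^esub>} \<and> K \<noteq> {\<one>\<^bsub>G\<^esub>})"

end

theory Submission imports Defs "HOL-Library.Countable" "HOL-Computational_Algebra.Primes"
begin

definition wpt :: "int \<Rightarrow> int \<Rightarrow> nat \<Rightarrow> nat \<Rightarrow> int" where
 "wpt a b j c = (if j = 0 then (if c = 0 then 1 else 0)
   else if j = 1 then (if c = 1 then 1 else 0)
   else if j = 2 then (if c = 2 then 1 else 0)
   else if j = 3 then 1
   else (if c = 0 then 1 else if c = 1 then a else b))"

definition lab :: "nat \<Rightarrow> nat" where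
 "lab i = (if i < 1 then 0 else if i < 3 then 1 else if i < 6 then 2 else if i < 10 then 3 else 4)"

definition bet :: "int \<Rightarrow> int \<Rightarrow> (nat \<Rightarrow> int) \<Rightarrow> (nat \<Rightarrow> int) \<Rightarrow> nat \<Rightarrow> int" where
 "bet a b f g c = (\<Sum>i<19. f (2*i) * g (2*i+1) * wpt a b (lab i) c)"

definition prodf :: "int \<Rightarrow> int \<Rightarrow> (nat \<Rightarrow> int) \<Rightarrow> (nat \<Rightarrow> int) \<Rightarrow> nat \<Rightarrow> int" where
 "prodf a b f g k = f k + g k + (if k < 38 then 0 else bet a b f g (k - 38))"

definition enc :: "nat \<Rightarrow> (nat \<Rightarrow> int) \<Rightarrow> nat" where
 "enc p f = to_nat (map (\<lambda>k. f k mod int p) [0..<41])"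

definition dec :: "nat \<Rightarrow> nat \<Rightarrow> int" where
 "dec x k = (from_nat x :: int list) ! k"

definition grp :: "nat \<Rightarrow> int \<Rightarrow> int \<Rightarrow> nat monoid" where
 "grp p a b = \<lparr>carrier = range (enc p), monoid.mult = (\<lambda>x y. enc p (prodf a b (dec x) (dec y))),
     one = enc p (\<lambda>_. 0)\<rparr>"

lemma dec_enc: "k < 41 \<Longrightarrow> dec (enc p f) k = f k mod int p"
  by (simp add: dec_def enc_def)

lemma enc_eq: "enc p f = enc p g \<longleftrightarrow> (\<forall>k<41. f k mod int p = g k mod int p)"
proof -
  have "enc p f = enc p g \<longleftrightarrow> map (\<lambda>k. f k mod int p) [0..<41] = map (\<lambda>k. g k mod int p) [0..<41]"
    unfolding enc_def by (metis from_nat_to_nat)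
  also have "\<dots> \<longleftrightarrow> (\<forall>k<41. f k mod int p = g k mod int p)"
    by (auto simp add: map_eq_conv)
  finally show ?thesis .
qed

lemma bet_cong:
  assumes "\<And>k. k < 38 \<Longrightarrow> f k mod int p = f' k mod int p"
      and "\<And>k. k < 38 \<Longrightarrow> g k mod int p = g' k mod int p"
  shows "bet a b f g c mod int p = bet a b f' g' c mod int p"
proof -
  have "\<And>i. i < 19 \<Longrightarrow> (f (2*i) * g (2*i+1) * wpt a b (lab i) c) mod int p
      = (f' (2*i) * g' (2*i+1) * wpt a b (lab i) c) mod int p"
  proof -
    fix i :: nat assume "i < 19"
    then have 1: "f (2*i) mod int p = f' (2*i) mod int p" and 2: "g (2*i+1) mod int p = g' (2*i+1) mod int p"
      using assms by auto
    show "(f (2*i) * g (2*i+1) * wpt a b (lab i) c) mod int p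
      = (f' (2*i) * g' (2*i+1) * wpt a b (lab i) c) mod int p"
      by (rule mod_mult_cong[OF mod_mult_cong[OF 1 2] refl])
  qed
  then have "(\<Sum>i<19. (f (2*i) * g (2*i+1) * wpt a b (lab i) c) mod int p)
      = (\<Sum>i<19. (f' (2*i) * g' (2*i+1) * wpt a b (lab i) c) mod int p)"
    by (intro sum.cong) auto
  then have "(\<Sum>i<19. (f (2*i) * g (2*i+1) * wpt a b (lab i) c) mod int p) mod int p
      = (\<Sum>i<19. (f' (2*i) * g' (2*i+1) * wpt a b (lab i) c) mod int p) mod int p" by simp
  then show ?thesis unfolding bet_def mod_sum_eq .
qed

lemma mult_enc: "enc p f \<otimes>\<^bsub>grp p a b\<^esub> enc p g = enc p (prodf a b f g)"
proof -
  have "\<forall>k<41. prodf a b (dec (enc p f)) (dec (enc p g)) k mod int p = prodf a b f g k mod int p"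
  proof (intro allI impI)
    fix k :: nat assume k: "k < 41"
    have bc: "bet a b (dec (enc p f)) (dec (enc p g)) c mod int p = bet a b f g c mod int p" for c
      by (rule bet_cong) (simp_all add: dec_enc)
    show "prodf a b (dec (enc p f)) (dec (enc p g)) k mod int p = prodf a b f g k mod int p"
    proof (cases "k < 38")
      case True
      then show ?thesis unfolding prodf_def using k by (simp add: dec_enc mod_add_eq)
    next
      case False
      have "(f k mod int p + g k mod int p + bet a b (dec (enc p f)) (dec (enc p g)) (k - 38)) mod int p
          = (f k + g k + bet a b f g (k-38)) mod int p"
        by (rule mod_add_cong[OF mod_add_cong[OF mod_mod_trivial mod_mod_trivial] bc])
      then show ?thesis unfolding prodf_def using k False by (simp add: dec_enc)
    qed
  qed
  then show ?thesis unfolding grp_def by (simp add: enc_eq)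
qed


lemma carrier_grp: "carrier (grp p a b) = range (enc p)"
  by (simp add: grp_def)

lemma one_grp: "\<one>\<^bsub>grp p a b\<^esub> = enc p (\<lambda>_. 0)"
  by (simp add: grp_def)

lemma bet_prodf_left: "bet a b (prodf a b f g) h c = bet a b f h c + bet a b g h c"
  unfolding bet_def sum.distrib[symmetric]
  by (intro sum.cong) (auto simp: prodf_def algebra_simps)

lemma bet_prodf_right: "bet a b f (prodf a b g h) c = bet a b f g c + bet a b f h c"
  unfolding bet_def sum.distrib[symmetric]
  by (intro sum.cong) (auto simp: prodf_def algebra_simps)

lemma prodf_assoc: "prodf a b (prodf a b f g) h = prodf a b f (prodf a b g h)"
  by (rule ext) (simp add: prodf_def bet_prodf_left bet_prodf_right)

lemma bet_zero_left: "bet a b (\<lambda>_. 0) g c = 0"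
  by (simp add: bet_def)

lemma prodf_zero_left: "prodf a b (\<lambda>_. 0) f = f"
  by (rule ext) (simp add: prodf_def bet_zero_left)

definition invf :: "int \<Rightarrow> int \<Rightarrow> (nat \<Rightarrow> int) \<Rightarrow> nat \<Rightarrow> int" where
  "invf a b f k = - f k + (if k < 38 then 0 else bet a b f f (k - 38))"

lemma bet_invf_left: "bet a b (invf a b f) h c = - bet a b f h c"
  unfolding bet_def sum_negf[symmetric]
  by (intro sum.cong) (auto simp: invf_def)

lemma prodf_invf: "prodf a b (invf a b f) f = (\<lambda>_. 0)"
  by (rule ext) (simp add: prodf_def bet_invf_left invf_def)

lemma grp_group: "group (grp p a b)"
proof (rule groupI)
  fix x y assume "x \<in> carrier (grp p a b)" "y \<in> carrier (grp p a b)"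
  then show "x \<otimes>\<^bsub>grp p a b\<^esub> y \<in> carrier (grp p a b)"
    by (auto simp: carrier_grp mult_enc)
next
  show "\<one>\<^bsub>grp p a b\<^esub> \<in> carrier (grp p a b)" by (simp add: carrier_grp one_grp)
next
  fix x y z assume "x \<in> carrier (grp p a b)" "y \<in> carrier (grp p a b)" "z \<in> carrier (grp p a b)"
  then obtain f g h where "x = enc p f" "y = enc p g" "z = enc p h" by (auto simp: carrier_grp)
  then show "x \<otimes>\<^bsub>grp p a b\<^esub> y \<otimes>\<^bsub>grp p a b\<^esub> z
      = x \<otimes>\<^bsub>grp p a b\<^esub> (y \<otimes>\<^bsub>grp p a b\<^esub> z)"
    by (simp add: mult_enc prodf_assoc)
next
  fix x assume "x \<in> carrier (grp p a b)"
  then obtain f where "x = enc p f" by (auto simp: carrier_grp)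
  then show "\<one>\<^bsub>grp p a b\<^esub> \<otimes>\<^bsub>grp p a b\<^esub> x = x"
    by (simp add: one_grp mult_enc prodf_zero_left)
next
  fix x assume "x \<in> carrier (grp p a b)"
  then obtain f where "x = enc p f" by (auto simp: carrier_grp)
  then show "\<exists>y\<in>carrier (grp p a b). y \<otimes>\<^bsub>grp p a b\<^esub> x = \<one>\<^bsub>grp p a b\<^esub>"
    by (intro bexI[of _ "enc p (invf a b f)"]) (simp_all add: one_grp mult_enc prodf_invf carrier_grp)
qed


lemma modinv:
  assumes p: "Factorial_Ring.prime p" and t: "t mod int p \<noteq> 0"
  shows "\<exists>s::nat. (int s * t) mod int p = 1"
proof -
  have pp: "Factorial_Ring.prime (int p)" using p by simp
  have p1: "int p > 1" using p prime_gt_1_nat by auto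
  have "\<not> int p dvd t" using t by auto
  then have "coprime (int p) t" using pp prime_imp_coprime by blast
  then have "gcd t (int p) = 1" by (simp add: coprime_iff_gcd_eq_1 gcd.commute)
  then obtain u v where uv: "u * t + v * int p = 1" using bezout_int[of t "int p"] by auto
  define s where "s = nat (u mod int p)"
  have "int s = u mod int p" using p1 by (simp add: s_def)
  then have "(int s * t) mod int p = (u * t) mod int p" by (simp add: mod_mult_left_eq)
  also have "\<dots> = (1 - v * int p) mod int p"
  proof -
    have "u * t = 1 - v * int p" using uv by linarith
    then show ?thesis by simp
  qed
  also have "\<dots> = 1" using p1 by (simp add: mod_diff_eq[symmetric])
  finally show ?thesis by blast
qed

lemma mod_mult_zeroD:
  assumes p: "Factorial_Ring.prime p" and "(t * x) mod int p = 0" and "t mod int p \<noteq> 0"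
  shows "x mod int p = 0"
proof -
  have pp: "Factorial_Ring.prime (int p)" using p by simp
  have "int p dvd t * x" using assms by auto
  then have "int p dvd t \<or> int p dvd x" using pp prime_dvd_mult_iff by blast
  then show ?thesis using assms by auto
qed

section \<open>Central elements\<close>

definition cenf :: "(nat \<Rightarrow> int) \<Rightarrow> nat \<Rightarrow> int" where
  "cenf u k = (if k < 38 then 0 else u (k - 38))"

definition cen :: "nat \<Rightarrow> (nat \<Rightarrow> int) \<Rightarrow> nat" where
  "cen p u = enc p (cenf u)"

lemma bet_cenf_left: "bet a b (cenf u) g c = 0"
  unfolding bet_def by (intro sum.neutral) (auto simp: cenf_def)

lemma bet_cenf_right: "bet a b f (cenf u) c = 0"
  unfolding bet_def by (intro sum.neutral) (auto simp: cenf_def)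

lemma cen_carrier [simp]: "cen p u \<in> carrier (grp p a b)"
  by (simp add: cen_def carrier_grp)

lemma cen_mult: "cen p u \<otimes>\<^bsub>grp p a b\<^esub> cen p v = cen p (\<lambda>c. u c + v c)"
  unfolding cen_def mult_enc
  by (rule arg_cong[where f="enc p"], rule ext) (simp add: prodf_def bet_cenf_left cenf_def)

lemma cen_central: "cen p u \<otimes>\<^bsub>grp p a b\<^esub> enc p f = enc p f \<otimes>\<^bsub>grp p a b\<^esub> cen p u"
  unfolding cen_def mult_enc
  by (rule arg_cong[where f="enc p"], rule ext) (simp add: prodf_def bet_cenf_left bet_cenf_right)

lemma cen_central': "x \<in> carrier (grp p a b) \<Longrightarrow> cen p u \<otimes>\<^bsub>grp p a b\<^esub> x = x \<otimes>\<^bsub>grp p a b\<^esub> cen p u"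
  using cen_central by (auto simp: carrier_grp)

lemma cen_eq: "cen p u = cen p v \<longleftrightarrow> (\<forall>c<3. u c mod int p = v c mod int p)"
proof
  assume "cen p u = cen p v"
  then have h: "\<forall>k<41. cenf u k mod int p = cenf v k mod int p" by (simp add: cen_def enc_eq)
  show "\<forall>c<3. u c mod int p = v c mod int p"
  proof (intro allI impI)
    fix c :: nat assume "c < 3"
    then show "u c mod int p = v c mod int p" using h[rule_format, of "c + 38"] by (simp add: cenf_def)
  qed
next
  assume h: "\<forall>c<3. u c mod int p = v c mod int p"
  show "cen p u = cen p v" unfolding cen_def enc_eq
  proof (intro allI impI)
    fix k :: nat assume "k < 41"
    then show "cenf u k mod int p = cenf v k mod int p" using h[rule_format, of "k - 38"]
      by (auto simp: cenf_def)
  qed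
qed

lemma one_cen: "\<one>\<^bsub>grp p a b\<^esub> = cen p (\<lambda>_. 0)"
  by (simp add: one_grp cen_def cenf_def enc_eq)

lemma cen_pow: "cen p u [^]\<^bsub>grp p a b\<^esub> (n::nat) = cen p (\<lambda>c. int n * u c)"
proof (induction n)
  case 0
  then show ?case by (simp add: one_cen)
next
  case (Suc n)
  then show ?case by (simp add: cen_mult algebra_simps)
qed

section \<open>Commutators\<close>

definition Dfn :: "int \<Rightarrow> int \<Rightarrow> (nat \<Rightarrow> int) \<Rightarrow> (nat \<Rightarrow> int) \<Rightarrow> nat \<Rightarrow> int" where
  "Dfn a b f g c = bet a b f g c - bet a b g f c"

lemma swap_enc: "enc p f \<otimes>\<^bsub>grp p a b\<^esub> enc p g = enc p g \<otimes>\<^bsub>grp p a b\<^esub> enc p f \<otimes>\<^bsub>grp p a b\<^esub> cen p (Dfn a b f g)"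
  unfolding cen_def mult_enc
  by (rule arg_cong[where f="enc p"], rule ext) (simp add: prodf_def bet_cenf_right cenf_def Dfn_def)

lemma comm_enc:
  "enc p f \<otimes>\<^bsub>grp p a b\<^esub> enc p g \<otimes>\<^bsub>grp p a b\<^esub> inv\<^bsub>grp p a b\<^esub> (enc p f) \<otimes>\<^bsub>grp p a b\<^esub> inv\<^bsub>grp p a b\<^esub> (enc p g)
   = cen p (Dfn a b f g)"
proof -
  interpret G: group "grp p a b" by (rule grp_group)
  let ?x = "enc p f" and ?y = "enc p g" and ?d = "cen p (Dfn a b f g)"
  let ?ix = "inv\<^bsub>grp p a b\<^esub> ?x" and ?iy = "inv\<^bsub>grp p a b\<^esub> ?y"
  have x: "?x \<in> carrier (grp p a b)" and y: "?y \<in> carrier (grp p a b)" and d: "?d \<in> carrier (grp p a b)"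
    by (auto simp: carrier_grp cen_def)
  have ix: "?ix \<in> carrier (grp p a b)" and iy: "?iy \<in> carrier (grp p a b)" using x y by auto
  have e2: "?d \<otimes>\<^bsub>grp p a b\<^esub> ?ix = ?ix \<otimes>\<^bsub>grp p a b\<^esub> ?d" using ix by (rule cen_central')
  have e3: "?d \<otimes>\<^bsub>grp p a b\<^esub> ?y = ?y \<otimes>\<^bsub>grp p a b\<^esub> ?d" using y by (rule cen_central')
  have "?x \<otimes>\<^bsub>grp p a b\<^esub> ?y \<otimes>\<^bsub>grp p a b\<^esub> ?ix \<otimes>\<^bsub>grp p a b\<^esub> ?iy
     = ?y \<otimes>\<^bsub>grp p a b\<^esub> ?x \<otimes>\<^bsub>grp p a b\<^esub> ?d \<otimes>\<^bsub>grp p a b\<^esub> ?ix \<otimes>\<^bsub>grp p a b\<^esub> ?iy"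
    using swap_enc[where f=f and g=g and p=p and a=a and b=b] by simp
  also have "\<dots> = ?y \<otimes>\<^bsub>grp p a b\<^esub> (?x \<otimes>\<^bsub>grp p a b\<^esub> ((?d \<otimes>\<^bsub>grp p a b\<^esub> ?ix) \<otimes>\<^bsub>grp p a b\<^esub> ?iy))"
    using x y d ix iy by (simp only: G.m_assoc G.m_closed)
  also have "\<dots> = ?y \<otimes>\<^bsub>grp p a b\<^esub> (?x \<otimes>\<^bsub>grp p a b\<^esub> ((?ix \<otimes>\<^bsub>grp p a b\<^esub> ?d) \<otimes>\<^bsub>grp p a b\<^esub> ?iy))"
    by (simp only: e2)
  also have "\<dots> = ?y \<otimes>\<^bsub>grp p a b\<^esub> ((?x \<otimes>\<^bsub>grp p a b\<^esub> ?ix) \<otimes>\<^bsub>grp p a b\<^esub> (?d \<otimes>\<^bsub>grp p a b\<^esub> ?iy))"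
    using x y d ix iy by (simp only: G.m_assoc G.m_closed)
  also have "\<dots> = (?d \<otimes>\<^bsub>grp p a b\<^esub> ?y) \<otimes>\<^bsub>grp p a b\<^esub> ?iy"
    using x y d ix iy e3 by (simp add: G.m_assoc)
  also have "\<dots> = ?y \<otimes>\<^bsub>grp p a b\<^esub> ?iy \<otimes>\<^bsub>grp p a b\<^esub> ?d"
    using y d iy by (simp add: G.m_assoc)
  also have "\<dots> = ?d" using y d by simp
  finally show ?thesis .
qed


definition cm :: "('a, 'b) monoid_scheme \<Rightarrow> 'a \<Rightarrow> 'a \<Rightarrow> 'a" where
  "cm G x y = x \<otimes>\<^bsub>G\<^esub> y \<otimes>\<^bsub>G\<^esub> inv\<^bsub>G\<^esub> x \<otimes>\<^bsub>G\<^esub> inv\<^bsub>G\<^esub> y"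

lemma cm_enc: "cm (grp p a b) (enc p f) (enc p g) = cen p (Dfn a b f g)"
  unfolding cm_def by (rule comm_enc)

lemma cm_central:
  assumes "group G" "x \<in> carrier G" "y \<in> carrier G" "x \<otimes>\<^bsub>G\<^esub> y = y \<otimes>\<^bsub>G\<^esub> x"
  shows "cm G x y = \<one>\<^bsub>G\<^esub>"
proof -
  interpret group G by fact
  have "cm G x y = y \<otimes>\<^bsub>G\<^esub> x \<otimes>\<^bsub>G\<^esub> inv\<^bsub>G\<^esub> x \<otimes>\<^bsub>G\<^esub> inv\<^bsub>G\<^esub> y"
    unfolding cm_def using assms by simp
  also have "\<dots> = \<one>\<^bsub>G\<^esub>" using assms by (simp add: m_assoc)
  finally show ?thesis .
qed

definition Ev :: "nat \<Rightarrow> nat \<Rightarrow> int" where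
  "Ev j k = (if k = j then 1 else 0)"

lemma bet_Ev_odd_right:
  assumes "i < 19" shows "bet a b f (Ev (Suc (2*i))) c = f (2*i) * wpt a b (lab i) c"
proof -
  have "bet a b f (Ev (Suc (2*i))) c = (\<Sum>i'<19. if i' = i then f (2*i) * wpt a b (lab i) c else 0)"
    unfolding bet_def by (intro sum.cong) (auto simp: Ev_def)
  also have "\<dots> = f (2*i) * wpt a b (lab i) c" using assms by (simp add: sum.delta)
  finally show ?thesis .
qed

lemma bet_Ev_even_left:
  assumes "i < 19" shows "bet a b (Ev (2*i)) f c = f (2*i+1) * wpt a b (lab i) c"
proof -
  have "bet a b (Ev (2*i)) f c = (\<Sum>i'<19. if i' = i then f (2*i+1) * wpt a b (lab i) c else 0)"
    unfolding bet_def by (intro sum.cong) (auto simp: Ev_def)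
  also have "\<dots> = f (2*i+1) * wpt a b (lab i) c" using assms by (simp add: sum.delta)
  finally show ?thesis .
qed

lemma bet_Ev_odd_left: "bet a b (Ev (Suc (2*i))) f c = 0"
  unfolding bet_def by (intro sum.neutral) (auto simp: Ev_def, presburger)

lemma bet_Ev_even_right: "bet a b f (Ev (2*i)) c = 0"
  unfolding bet_def by (intro sum.neutral) (auto simp: Ev_def, presburger)

lemma cm_Ev_odd: "i < 19 \<Longrightarrow>
  cm (grp p a b) (enc p f) (enc p (Ev (2*i+1))) = cen p (\<lambda>c. f (2*i) * wpt a b (lab i) c)"
  by (simp add: cm_enc, rule arg_cong[where f="cen p"], rule ext, simp add: Dfn_def bet_Ev_odd_right bet_Ev_odd_left)

lemma cm_Ev_even: "i < 19 \<Longrightarrow>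
  cm (grp p a b) (enc p f) (enc p (Ev (2*i))) = cen p (\<lambda>c. - (f (2*i+1) * wpt a b (lab i) c))"
  by (simp add: cm_enc, rule arg_cong[where f="cen p"], rule ext, simp add: Dfn_def bet_Ev_even_right bet_Ev_even_left)

lemma wpt_one: "\<exists>c<3. wpt a b j c = 1"
  unfolding wpt_def
  by (cases "j = 0"; cases "j = 1"; cases "j = 2"; cases "j = 3") (auto intro: exI[of _ 0] exI[of _ 1] exI[of _ 2])

lemma cen_scaled_one:
  assumes p: "Factorial_Ring.prime p"
    and h: "cen p (\<lambda>c. t * wpt a b j c) = cen p (\<lambda>_. 0)"
  shows "t mod int p = 0"
proof -
  obtain c where c: "c < 3" "wpt a b j c = 1" using wpt_one by blast
  then show ?thesis using h by (auto simp: cen_eq)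
qed

lemma enc_is_cen:
  assumes "\<forall>i<19. f (2*i) mod int p = 0 \<and> f (2*i+1) mod int p = 0"
  shows "enc p f = cen p (\<lambda>c. f (c + 38))"
  unfolding cen_def enc_eq
proof (intro allI impI)
  fix k :: nat assume k: "k < 41"
  show "f k mod int p = cenf (\<lambda>c. f (c + 38)) k mod int p"
  proof (cases "k < 38")
    case True
    have "k = 2 * (k div 2) \<or> k = 2 * (k div 2) + 1" by presburger
    moreover have "k div 2 < 19" using True by simp
    ultimately have "f k mod int p = 0" using assms by metis
    then show ?thesis using True by (simp add: cenf_def)
  next
    case False
    then show ?thesis by (simp add: cenf_def)
  qed
qed

lemma central_is_cen:
  assumes p: "Factorial_Ring.prime p" and x: "x \<in> carrier (grp p a b)"
    and cent: "\<forall>y\<in>carrier (grp p a b). x \<otimes>\<^bsub>grp p a b\<^esub> y = y \<otimes>\<^bsub>grp p a b\<^esub> x"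
  shows "x \<in> range (cen p)"
proof -
  obtain f where f: "x = enc p f" using x by (auto simp: carrier_grp)
  have "\<forall>i<19. f (2*i) mod int p = 0 \<and> f (2*i+1) mod int p = 0"
  proof (intro allI impI conjI)
    fix i :: nat assume i: "i < 19"
    have "cm (grp p a b) x (enc p (Ev (2*i+1))) = \<one>\<^bsub>grp p a b\<^esub>"
      by (rule cm_central[OF grp_group x]) (use cent in \<open>auto simp: carrier_grp\<close>)
    then have "cen p (\<lambda>c. f (2*i) * wpt a b (lab i) c) = cen p (\<lambda>_. 0)"
      using cm_Ev_odd[OF i] f by (simp add: one_cen)
    then show "f (2*i) mod int p = 0" by (rule cen_scaled_one[OF p])
    have "cm (grp p a b) x (enc p (Ev (2*i))) = \<one>\<^bsub>grp p a b\<^esub>"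
      by (rule cm_central[OF grp_group x]) (use cent in \<open>auto simp: carrier_grp\<close>)
    then have "cen p (\<lambda>c. (- f (2*i+1)) * wpt a b (lab i) c) = cen p (\<lambda>_. 0)"
      using cm_Ev_even[OF i] f by (simp add: one_cen)
    then have "(- f (2*i+1)) mod int p = 0" by (rule cen_scaled_one[OF p])
    then show "f (2*i+1) mod int p = 0" by (simp add: dvd_eq_mod_eq_0[symmetric])
  qed
  then show ?thesis using f enc_is_cen by auto
qed

lemma center_grp:
  assumes p: "Factorial_Ring.prime p"
  shows "center (grp p a b) = range (cen p)"
proof
  show "center (grp p a b) \<subseteq> range (cen p)"
    using central_is_cen[OF p] unfolding center_def by blast
  show "range (cen p) \<subseteq> center (grp p a b)"
    unfolding center_def using cen_central' by auto
qed

lemma cen_inv: "inv\<^bsub>grp p a b\<^esub> (cen p u) = cen p (\<lambda>c. - u c)"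
proof -
  interpret G: group "grp p a b" by (rule grp_group)
  show ?thesis by (rule G.inv_equality) (simp_all add: cen_mult one_cen)
qed

lemma cen_subgroup: "subgroup (range (cen p)) (grp p a b)"
proof -
  interpret G: group "grp p a b" by (rule grp_group)
  show ?thesis
    by (rule G.subgroupI) (auto simp: cen_inv cen_mult)
qed

lemma grp_metabelian:
  assumes p: "Factorial_Ring.prime p"
  shows "metabelian (grp p a b)"
proof -
  interpret G: group "grp p a b" by (rule grp_group)
  have "derived_set (grp p a b) (carrier (grp p a b)) \<subseteq> range (cen p)"
  proof
    fix z assume "z \<in> derived_set (grp p a b) (carrier (grp p a b))"
    then obtain x y where "x \<in> carrier (grp p a b)" "y \<in> carrier (grp p a b)"
      and z: "z = cm (grp p a b) x y" unfolding cm_def by blast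
    then obtain f g where "x = enc p f" "y = enc p g" by (auto simp: carrier_grp)
    then show "z \<in> range (cen p)" using z cm_enc by auto
  qed
  then have "derived (grp p a b) (carrier (grp p a b)) \<subseteq> range (cen p)"
    unfolding derived_def using G.generate_subgroup_incl cen_subgroup by blast
  then show ?thesis unfolding metabelian_def using center_grp[OF p] by simp
qed


section \<open>Order\<close>

lemma range_enc:
  assumes "p > 0"
  shows "range (enc p) = to_nat ` {xs. set xs \<subseteq> {0..<int p} \<and> length xs = 41}"
proof
  show "range (enc p) \<subseteq> to_nat ` {xs. set xs \<subseteq> {0..<int p} \<and> length xs = 41}"
  proof
    fix y assume "y \<in> range (enc p)"
    then obtain f where y: "y = enc p f" by auto
    have "set (map (\<lambda>k. f k mod int p) [0..<41]) \<subseteq> {0..<int p}" using assms by auto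
    then show "y \<in> to_nat ` {xs. set xs \<subseteq> {0..<int p} \<and> length xs = 41}"
      unfolding y enc_def by (intro imageI) simp
  qed
  show "to_nat ` {xs. set xs \<subseteq> {0..<int p} \<and> length xs = 41} \<subseteq> range (enc p)"
  proof
    fix y assume "y \<in> to_nat ` {xs. set xs \<subseteq> {0..<int p} \<and> length xs = 41}"
    then obtain xs where xs: "set xs \<subseteq> {0..<int p}" "length xs = 41" and y: "y = to_nat xs" by auto
    have "map (\<lambda>k. xs ! k mod int p) [0..<41] = xs"
    proof (rule nth_equalityI)
      show "length (map (\<lambda>k. xs ! k mod int p) [0..<41]) = length xs" using xs by simp
      fix k assume "k < length (map (\<lambda>k. xs ! k mod int p) [0..<41])"
      then have k: "k < 41" by simp
      then have "xs ! k \<in> set xs" using xs by simp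
      then have "xs ! k \<in> {0..<int p}" using xs by blast
      then show "map (\<lambda>k. xs ! k mod int p) [0..<41] ! k = xs ! k" using k by simp
    qed
    then have "y = enc p (\<lambda>k. xs ! k)" using y by (simp add: enc_def)
    then show "y \<in> range (enc p)" by simp
  qed
qed

lemma grp_order:
  assumes "p > 0"
  shows "order (grp p a b) = p ^ 41"
proof -
  have "order (grp p a b) = card (to_nat ` {xs. set xs \<subseteq> {0..<int p} \<and> length xs = (41::nat)})"
    unfolding order_def carrier_grp range_enc[OF assms] ..
  also have "\<dots> = card {xs. set xs \<subseteq> {0..<int p} \<and> length xs = (41::nat)}"
    by (rule card_image) (simp add: inj_on_def)
  also have "\<dots> = p ^ 41" by (simp add: card_lists_length_eq)
  finally show ?thesis .
qed

lemma card_lists_nth: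
  assumes "\<And>k. finite (A k)"
  shows "card {xs. length xs = n \<and> (\<forall>k<n. xs ! k \<in> A k)} = (\<Prod>k<n. card (A k))"
  using assms
proof (induction n arbitrary: A)
  case 0
  then show ?case by simp
next
  case (Suc n)
  have eq: "{xs. length xs = Suc n \<and> (\<forall>k<Suc n. xs ! k \<in> A k)}
     = (\<lambda>(x, ys). x # ys) ` (A 0 \<times> {ys. length ys = n \<and> (\<forall>k<n. ys ! k \<in> A (Suc k))})"
  proof
    show "{xs. length xs = Suc n \<and> (\<forall>k<Suc n. xs ! k \<in> A k)}
      \<subseteq> (\<lambda>(x, ys). x # ys) ` (A 0 \<times> {ys. length ys = n \<and> (\<forall>k<n. ys ! k \<in> A (Suc k))})"
    proof
      fix xs assume "xs \<in> {xs. length xs = Suc n \<and> (\<forall>k<Suc n. xs ! k \<in> A k)}"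
      then have h: "length xs = Suc n" "\<forall>k<Suc n. xs ! k \<in> A k" by auto
      then obtain x ys where xs: "xs = x # ys" by (cases xs) auto
      have "x \<in> A 0" using h xs by auto
      moreover have "length ys = n \<and> (\<forall>k<n. ys ! k \<in> A (Suc k))" using h xs by auto
      ultimately show "xs \<in> (\<lambda>(x, ys). x # ys) ` (A 0 \<times> {ys. length ys = n \<and> (\<forall>k<n. ys ! k \<in> A (Suc k))})"
        using xs by auto
    qed
    show "(\<lambda>(x, ys). x # ys) ` (A 0 \<times> {ys. length ys = n \<and> (\<forall>k<n. ys ! k \<in> A (Suc k))})
      \<subseteq> {xs. length xs = Suc n \<and> (\<forall>k<Suc n. xs ! k \<in> A k)}"
    proof
      fix xs assume "xs \<in> (\<lambda>(x, ys). x # ys) ` (A 0 \<times> {ys. length ys = n \<and> (\<forall>k<n. ys ! k \<in> A (Suc k))})"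
      then obtain x ys where xs: "xs = x # ys" and h: "x \<in> A 0" "length ys = n" "\<forall>k<n. ys ! k \<in> A (Suc k)"
        by auto
      have "\<forall>k<Suc n. xs ! k \<in> A k"
      proof (intro allI impI)
        fix k assume "k < Suc n"
        then show "xs ! k \<in> A k" using h xs by (cases k) auto
      qed
      then show "xs \<in> {xs. length xs = Suc n \<and> (\<forall>k<Suc n. xs ! k \<in> A k)}" using xs h by auto
    qed
  qed
  have "card {xs. length xs = Suc n \<and> (\<forall>k<Suc n. xs ! k \<in> A k)}
      = card (A 0 \<times> {ys. length ys = n \<and> (\<forall>k<n. ys ! k \<in> A (Suc k))})"
    unfolding eq by (rule card_image) (auto simp: inj_on_def)
  also have "\<dots> = card (A 0) * (\<Prod>k<n. card (A (Suc k)))"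
    using Suc.IH[of "\<lambda>k. A (Suc k)"] Suc.prems by (simp add: card_cartesian_product)
  also have "\<dots> = (\<Prod>k<Suc n. card (A k))" by (simp only: prod.lessThan_Suc_shift)
  finally show ?case .
qed

lemma prod_double: "(\<Prod>k<2*n. F k) = (\<Prod>i<n. F (2*i) * F (2*i+1))"
  for F :: "nat \<Rightarrow> nat"
  by (induction n) (simp_all add: mult.assoc)

lemma prod_if_const: "finite A \<Longrightarrow> (\<Prod>i\<in>A. if Q i then c else 1) = (c::nat) ^ card {i\<in>A. Q i}"
  by (simp add: prod.If_cases Int_def)

lemma card_lab:
  "card {i. i < 19 \<and> P (lab i)} = (if P 0 then 1 else 0) + (if P 1 then 2 else 0) + (if P 2 then 3 else 0)
     + (if P 3 then 4 else 0) + (if P 4 then 9 else 0)"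
proof -
  have "card {i. i < 19 \<and> P (lab i)} = card {i\<in>{..<19}. P (lab i)}" by (simp add: lessThan_def)
  also have "\<dots> = (\<Sum>i<19. if P (lab i) then 1 else 0)"
    by (simp add: sum.If_cases Int_def)
  also have "\<dots> = (if P 0 then 1 else 0) + (if P 1 then 2 else 0) + (if P 2 then 3 else 0)
     + (if P 3 then 4 else 0) + (if P 4 then 9 else 0)"
    by (simp add: numeral_eq_Suc lab_def)
  finally show ?thesis .
qed


section \<open>The sets T\<close>

definition Tset :: "('a, 'b) monoid_scheme \<Rightarrow> 'a \<Rightarrow> 'a set" where
  "Tset G z = {x \<in> carrier G. \<forall>g\<in>carrier G. \<exists>n::nat. cm G x g = z [^]\<^bsub>G\<^esub> n}"

definition inl :: "nat \<Rightarrow> (nat \<Rightarrow> int) \<Rightarrow> (nat \<Rightarrow> int) \<Rightarrow> bool" where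
  "inl p w u \<longleftrightarrow> (\<exists>n::nat. \<forall>c<3. w c mod int p = (int n * u c) mod int p)"

lemma sum_mod_cong:
  assumes "\<And>i. i \<in> A \<Longrightarrow> F i mod m = G i mod m"
  shows "sum F A mod m = sum G A mod (m::int)"
proof -
  have "(\<Sum>i\<in>A. F i mod m) = (\<Sum>i\<in>A. G i mod m)" using assms by (rule sum.cong[OF refl])
  then have "(\<Sum>i\<in>A. F i mod m) mod m = (\<Sum>i\<in>A. G i mod m) mod m" by simp
  then show ?thesis unfolding mod_sum_eq .
qed

lemma inl_from:
  assumes p: "Factorial_Ring.prime p" and t: "t mod int p \<noteq> 0"
    and h: "\<forall>c<3. (t * w c) mod int p = (int n * u c) mod int p"
  shows "inl p w u"
proof -
  obtain s :: nat where s: "(int s * t) mod int p = 1" using modinv[OF p t] by blast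
  have "\<forall>c<3. w c mod int p = (int (s * n) * u c) mod int p"
  proof (intro allI impI)
    fix c :: nat assume c: "c < 3"
    have "w c mod int p = ((int s * t) mod int p * w c) mod int p" using s by simp
    also have "\<dots> = (int s * (t * w c)) mod int p" by (simp add: mod_mult_left_eq mult.assoc)
    also have "\<dots> = (int s * ((t * w c) mod int p)) mod int p" by (simp add: mod_mult_right_eq)
    also have "\<dots> = (int s * ((int n * u c) mod int p)) mod int p" using h c by simp
    also have "\<dots> = (int (s * n) * u c) mod int p" by (simp add: mod_mult_right_eq mult.assoc)
    finally show "w c mod int p = (int (s * n) * u c) mod int p" .
  qed
  then show ?thesis unfolding inl_def by blast
qed

lemma Tset_mem:
  assumes p: "Factorial_Ring.prime p"
  shows "enc p f \<in> Tset (grp p a b) (cen p u) \<longleftrightarrow>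
    (\<forall>i<19. \<not> inl p (wpt a b (lab i)) u \<longrightarrow> f (2*i) mod int p = 0 \<and> f (2*i+1) mod int p = 0)"
proof
  assume T: "enc p f \<in> Tset (grp p a b) (cen p u)"
  show "\<forall>i<19. \<not> inl p (wpt a b (lab i)) u \<longrightarrow> f (2*i) mod int p = 0 \<and> f (2*i+1) mod int p = 0"
  proof (intro allI impI conjI)
    fix i :: nat assume i: "i < 19" and nq: "\<not> inl p (wpt a b (lab i)) u"
    show "f (2*i) mod int p = 0"
    proof (rule ccontr)
      assume nz: "f (2*i) mod int p \<noteq> 0"
      obtain n :: nat where "cm (grp p a b) (enc p f) (enc p (Ev (2*i+1))) = cen p u [^]\<^bsub>grp p a b\<^esub> n"
        using T unfolding Tset_def by (auto simp: carrier_grp)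
      then have "cen p (\<lambda>c. f (2*i) * wpt a b (lab i) c) = cen p (\<lambda>c. int n * u c)"
        using cm_Ev_odd[OF i] by (simp add: cen_pow)
      then have "\<forall>c<3. (f (2*i) * wpt a b (lab i) c) mod int p = (int n * u c) mod int p"
        by (simp add: cen_eq)
      then have "inl p (wpt a b (lab i)) u" by (rule inl_from[OF p nz])
      then show False using nq by blast
    qed
    show "f (2*i+1) mod int p = 0"
    proof (rule ccontr)
      assume nz0: "f (2*i+1) mod int p \<noteq> 0"
      have nz: "(- f (2*i+1)) mod int p \<noteq> 0"
        using nz0 by (simp add: dvd_eq_mod_eq_0[symmetric])
      obtain n :: nat where "cm (grp p a b) (enc p f) (enc p (Ev (2*i))) = cen p u [^]\<^bsub>grp p a b\<^esub> n"
        using T unfolding Tset_def by (auto simp: carrier_grp)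
      then have "cen p (\<lambda>c. - (f (2*i+1) * wpt a b (lab i) c)) = cen p (\<lambda>c. int n * u c)"
        using cm_Ev_even[OF i] by (simp add: cen_pow)
      then have "\<forall>c<3. ((- f (2*i+1)) * wpt a b (lab i) c) mod int p = (int n * u c) mod int p"
        by (simp add: cen_eq)
      then have "inl p (wpt a b (lab i)) u" by (rule inl_from[OF p nz])
      then show False using nq by blast
    qed
  qed
next
  assume cond: "\<forall>i<19. \<not> inl p (wpt a b (lab i)) u \<longrightarrow> f (2*i) mod int p = 0 \<and> f (2*i+1) mod int p = 0"
  define Q where "Q i \<longleftrightarrow> inl p (wpt a b (lab i)) u" for i
  define nn where "nn i = (SOME n::nat. \<forall>c<3. wpt a b (lab i) c mod int p = (int n * u c) mod int p)" for i
  have nn: "\<forall>c<3. wpt a b (lab i) c mod int p = (int (nn i) * u c) mod int p" if "Q i" for i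
  proof -
    have "\<exists>n::nat. \<forall>c<3. wpt a b (lab i) c mod int p = (int n * u c) mod int p"
      using that unfolding Q_def inl_def .
    then show ?thesis unfolding nn_def by (rule someI_ex)
  qed
  have "\<forall>g\<in>carrier (grp p a b). \<exists>n::nat. cm (grp p a b) (enc p f) g = cen p u [^]\<^bsub>grp p a b\<^esub> n"
  proof
    fix g assume "g \<in> carrier (grp p a b)"
    then obtain h where g: "g = enc p h" by (auto simp: carrier_grp)
    define t where "t i = f (2*i) * h (2*i+1) - h (2*i) * f (2*i+1)" for i
    define N where "N = (\<Sum>i<19. if Q i then nat (t i mod int p) * nn i else 0)"
    have D: "Dfn a b f h c = (\<Sum>i<19. t i * wpt a b (lab i) c)" for c
      unfolding Dfn_def bet_def t_def sum_subtractf[symmetric]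
      by (intro sum.cong) (auto simp: algebra_simps)
    have ND: "int N * u c = (\<Sum>i<19. if Q i then (t i mod int p) * (int (nn i) * u c) else 0)" for c
    proof -
      have "int N * u c = (\<Sum>i<19. int (if Q i then nat (t i mod int p) * nn i else 0) * u c)"
        unfolding N_def of_nat_sum sum_distrib_right ..
      also have "\<dots> = (\<Sum>i<19. if Q i then (t i mod int p) * (int (nn i) * u c) else 0)"
      proof (intro sum.cong refl)
        fix i
        have "int (nat (t i mod int p)) = t i mod int p"
          using p prime_gt_0_nat by simp
        then show "int (if Q i then nat (t i mod int p) * nn i else 0) * u c
          = (if Q i then (t i mod int p) * (int (nn i) * u c) else 0)"
          by (simp add: algebra_simps)
      qed
      finally show ?thesis .
    qed
    have "\<forall>c<3. Dfn a b f h c mod int p = (int N * u c) mod int p"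
    proof (intro allI impI)
      fix c :: nat assume c: "c < 3"
      have "(\<Sum>i<19. t i * wpt a b (lab i) c) mod int p
          = (\<Sum>i<19. if Q i then (t i mod int p) * (int (nn i) * u c) else 0) mod int p"
      proof (rule sum_mod_cong)
        fix i assume i: "i \<in> {..<19::nat}"
        show "(t i * wpt a b (lab i) c) mod int p = (if Q i then (t i mod int p) * (int (nn i) * u c) else 0) mod int p"
        proof (cases "Q i")
          case True
          have e: "(t i * wpt a b (lab i) c) mod int p = ((t i mod int p) * (int (nn i) * u c)) mod int p"
            by (rule mod_mult_cong[OF mod_mod_trivial[symmetric]]) (use nn[OF True] c in blast)
          then show ?thesis using True by simp
        next
          case False
          then have "f (2*i) mod int p = 0" "f (2*i+1) mod int p = 0" using cond i unfolding Q_def by auto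
          then have d1: "int p dvd f (2*i)" "int p dvd f (2*i+1)" by (simp_all add: dvd_eq_mod_eq_0)
          have "int p dvd t i" unfolding t_def using d1 by (intro dvd_diff dvd_mult2 dvd_mult)
          then have "int p dvd t i * wpt a b (lab i) c" by (rule dvd_mult2)
          then show ?thesis using False by (simp add: dvd_eq_mod_eq_0)
        qed
      qed
      then show "Dfn a b f h c mod int p = (int N * u c) mod int p" using D ND by simp
    qed
    then have "cm (grp p a b) (enc p f) g = cen p u [^]\<^bsub>grp p a b\<^esub> N"
      unfolding g cm_enc cen_pow cen_eq .
    then show "\<exists>n::nat. cm (grp p a b) (enc p f) g = cen p u [^]\<^bsub>grp p a b\<^esub> n" by blast
  qed
  then show "enc p f \<in> Tset (grp p a b) (cen p u)" unfolding Tset_def by (simp add: carrier_grp)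
qed


lemma to_nat_enc:
  assumes xs: "set xs \<subseteq> {0..<int p}" "length xs = 41"
  shows "to_nat xs = enc p (\<lambda>k. xs ! k)"
proof -
  have "map (\<lambda>k. xs ! k mod int p) [0..<41] = xs"
  proof (rule nth_equalityI)
    show "length (map (\<lambda>k. xs ! k mod int p) [0..<41]) = length xs" using xs by simp
    fix k assume "k < length (map (\<lambda>k. xs ! k mod int p) [0..<41])"
    then have k: "k < 41" by simp
    then have "xs ! k \<in> set xs" using xs by simp
    then have "xs ! k \<in> {0..<int p}" using xs by blast
    then show "map (\<lambda>k. xs ! k mod int p) [0..<41] ! k = xs ! k" using k by simp
  qed
  then show ?thesis by (simp add: enc_def)
qed

lemma prod_plus3: "(\<Prod>k<Suc (Suc (Suc m)). F k) = (\<Prod>k<m. F k) * F m * F (Suc m) * F (Suc (Suc m))"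
  for F :: "nat \<Rightarrow> nat"
  by (simp add: mult.assoc)

lemma Tset_card:
  assumes p: "Factorial_Ring.prime p"
  shows "card (Tset (grp p a b) (cen p u)) = p ^ (3 + 2 * card {i. i < 19 \<and> inl p (wpt a b (lab i)) u})"
proof -
  have p0: "p > 0" using p prime_gt_0_nat by blast
  define Q where "Q i \<longleftrightarrow> inl p (wpt a b (lab i)) u" for i
  define A where "A k = (if k < 38 \<and> \<not> Q (k div 2) then {0} else {0..<int p})" for k
  define L where "L = {xs. length xs = 41 \<and> (\<forall>k<41. xs ! k \<in> A k)}"
  have L_sub: "set xs \<subseteq> {0..<int p}" if "xs \<in> L" for xs
  proof
    fix y assume "y \<in> set xs"
    then obtain k where "k < length xs" "xs ! k = y" by (auto simp: in_set_conv_nth)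
    then show "y \<in> {0..<int p}" using that p0 unfolding L_def A_def by (auto split: if_splits)
  qed
  have T_eq: "Tset (grp p a b) (cen p u) = to_nat ` L"
  proof
    show "Tset (grp p a b) (cen p u) \<subseteq> to_nat ` L"
    proof
      fix x assume xT: "x \<in> Tset (grp p a b) (cen p u)"
      then have "x \<in> carrier (grp p a b)" unfolding Tset_def by blast
      then obtain f where f: "x = enc p f" by (auto simp: carrier_grp)
      have cond: "\<forall>i<19. \<not> Q i \<longrightarrow> f (2*i) mod int p = 0 \<and> f (2*i+1) mod int p = 0"
        using xT Tset_mem[OF p, of f a b u] f unfolding Q_def by simp
      have "map (\<lambda>k. f k mod int p) [0..<41] \<in> L"
        unfolding L_def
      proof (intro CollectI conjI allI impI)
        fix k :: nat assume k41: "k < 41"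
        show "map (\<lambda>k. f k mod int p) [0..<41] ! k \<in> A k"
        proof (cases "k < 38 \<and> \<not> Q (k div 2)")
          case True
          have "k = 2 * (k div 2) \<or> k = 2 * (k div 2) + 1" by presburger
          moreover have "k div 2 < 19" using True by linarith
          ultimately have "f k mod int p = 0" using cond True by metis
          then show ?thesis using True k41 by (simp add: A_def)
        next
          case False
          then have "A k = {0..<int p}" unfolding A_def by (simp only: if_False)
          then show ?thesis using k41 p0 by simp
        qed
      qed simp
      then show "x \<in> to_nat ` L" unfolding f enc_def by blast
    qed
    show "to_nat ` L \<subseteq> Tset (grp p a b) (cen p u)"
    proof
      fix y assume "y \<in> to_nat ` L"
      then obtain xs where xs: "xs \<in> L" and y: "y = to_nat xs" by blast
      have len: "length xs = 41" using xs by (simp add: L_def)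
      have y2: "y = enc p (\<lambda>k. xs ! k)" using to_nat_enc[OF L_sub[OF xs] len] y by simp
      have "\<forall>i<19. \<not> Q i \<longrightarrow> xs ! (2*i) mod int p = 0 \<and> xs ! (2*i+1) mod int p = 0"
      proof (intro allI impI)
        fix i :: nat assume i: "i < 19" and nq: "\<not> Q i"
        have "xs ! (2*i) \<in> A (2*i)" "xs ! (2*i+1) \<in> A (2*i+1)" using xs i by (auto simp: L_def)
        moreover have "(2*i+1) div 2 = i" by simp
        ultimately have "xs ! (2*i) = 0" "xs ! (2*i+1) = 0" using i nq by (auto simp: A_def)
        then show "xs ! (2*i) mod int p = 0 \<and> xs ! (2*i+1) mod int p = 0" by simp
      qed
      then show "y \<in> Tset (grp p a b) (cen p u)"
        unfolding y2 Tset_mem[OF p] Q_def by simp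
    qed
  qed
  have "card (Tset (grp p a b) (cen p u)) = card L"
    unfolding T_eq by (rule card_image) (simp add: inj_on_def)
  also have "\<dots> = (\<Prod>k<41. card (A k))"
    unfolding L_def by (rule card_lists_nth) (simp add: A_def)
  also have "\<dots> = (\<Prod>k<2*19. card (A k)) * card (A 38) * card (A 39) * card (A 40)"
    using prod_plus3[of "\<lambda>k. card (A k)" 38] by (simp add: numeral_eq_Suc)
  also have "(\<Prod>k<2*19. card (A k)) = (\<Prod>i<19. card (A (2*i)) * card (A (2*i+1)))"
    by (rule prod_double)
  also have "\<dots> = (\<Prod>i<19. if Q i then p * p else 1)"
  proof (rule prod.cong[OF refl])
    fix i assume "i \<in> {..<19::nat}"
    then have i: "i < 19" by simp
    have "(2*i+1) div 2 = i" by simp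
    then show "card (A (2*i)) * card (A (2*i+1)) = (if Q i then p * p else 1)"
      using i by (simp add: A_def)
  qed
  also have "\<dots> = (p * p) ^ card {i\<in>{..<19}. Q i}" by (rule prod_if_const) simp
  finally have "card (Tset (grp p a b) (cen p u)) = (p * p) ^ card {i\<in>{..<19}. Q i} * p * p * p"
    by (simp add: A_def)
  also have "\<dots> = p ^ (3 + 2 * card {i. i < 19 \<and> Q i})"
    by (simp add: power_add power_mult power2_eq_square lessThan_def power3_eq_cube)
  finally show ?thesis unfolding Q_def .
qed


section \<open>Isomorphism invariance\<close>

lemma iso_Tset_card:
  assumes G: "group G" and H: "group H" and phi: "\<phi> \<in> iso G H" and z: "z \<in> carrier G"
  shows "card (Tset H (\<phi> z)) = card (Tset G z)"
proof -
  interpret G: group G by fact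
  interpret H: group H by fact
  have hom: "\<phi> \<in> hom G H" and bij: "bij_betw \<phi> (carrier G) (carrier H)" using phi by (auto simp: iso_def)
  interpret gh: group_hom G H \<phi> using hom G H by (simp add: group_hom_def group_hom_axioms_def)
  have inj: "inj_on \<phi> (carrier G)" and surj: "\<phi> ` carrier G = carrier H" using bij by (auto simp: bij_betw_def)
  have cmphi: "\<phi> (cm G x g) = cm H (\<phi> x) (\<phi> g)" if "x \<in> carrier G" "g \<in> carrier G" for x g
    using that by (simp add: cm_def)
  have powphi: "\<phi> (z [^]\<^bsub>G\<^esub> (n::nat)) = \<phi> z [^]\<^bsub>H\<^esub> n" for n using z by (rule gh.hom_nat_pow)
  have eqv: "cm G x g = z [^]\<^bsub>G\<^esub> n \<longleftrightarrow> cm H (\<phi> x) (\<phi> g) = \<phi> z [^]\<^bsub>H\<^esub> n"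
    if "x \<in> carrier G" "g \<in> carrier G" for x g and n :: nat
  proof -
    have "cm G x g \<in> carrier G" using that by (simp add: cm_def)
    moreover have "z [^]\<^bsub>G\<^esub> n \<in> carrier G" using z by simp
    ultimately have "cm G x g = z [^]\<^bsub>G\<^esub> n \<longleftrightarrow> \<phi> (cm G x g) = \<phi> (z [^]\<^bsub>G\<^esub> n)"
      using inj by (auto simp: inj_on_def)
    then show ?thesis using cmphi[OF that] powphi by simp
  qed
  have img: "\<phi> ` Tset G z = Tset H (\<phi> z)"
  proof
    show "\<phi> ` Tset G z \<subseteq> Tset H (\<phi> z)"
    proof
      fix y assume "y \<in> \<phi> ` Tset G z"
      then obtain x where x: "x \<in> Tset G z" and y: "y = \<phi> x" by blast
      have xc: "x \<in> carrier G" using x by (simp add: Tset_def)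
      have "\<forall>g'\<in>carrier H. \<exists>n::nat. cm H y g' = \<phi> z [^]\<^bsub>H\<^esub> n"
      proof
        fix g' assume "g' \<in> carrier H"
        then obtain g where g: "g \<in> carrier G" "g' = \<phi> g" using surj by blast
        then obtain n :: nat where "cm G x g = z [^]\<^bsub>G\<^esub> n" using x by (auto simp: Tset_def)
        then show "\<exists>n::nat. cm H y g' = \<phi> z [^]\<^bsub>H\<^esub> n" using eqv[OF xc g(1)] g y by blast
      qed
      then show "y \<in> Tset H (\<phi> z)" using xc y by (simp add: Tset_def)
    qed
    show "Tset H (\<phi> z) \<subseteq> \<phi> ` Tset G z"
    proof
      fix y assume yT: "y \<in> Tset H (\<phi> z)"
      then have "y \<in> carrier H" by (simp add: Tset_def)
      then obtain x where xc: "x \<in> carrier G" and y: "y = \<phi> x" using surj by blast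
      have "\<forall>g\<in>carrier G. \<exists>n::nat. cm G x g = z [^]\<^bsub>G\<^esub> n"
      proof
        fix g assume g: "g \<in> carrier G"
        then have "\<phi> g \<in> carrier H" by simp
        then obtain n :: nat where "cm H y (\<phi> g) = \<phi> z [^]\<^bsub>H\<^esub> n" using yT by (auto simp: Tset_def)
        then show "\<exists>n::nat. cm G x g = z [^]\<^bsub>G\<^esub> n" using eqv[OF xc g] y by blast
      qed
      then show "y \<in> \<phi> ` Tset G z" using xc y by (auto simp: Tset_def)
    qed
  qed
  have "inj_on \<phi> (Tset G z)" using inj by (rule inj_on_subset) (auto simp: Tset_def)
  then have "card (\<phi> ` Tset G z) = card (Tset G z)" by (rule card_image)
  then show ?thesis using img by simp
qed

lemma iso_central:
  assumes G: "group G" and H: "group H" and phi: "\<phi> \<in> iso G H" and z: "z \<in> carrier G"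
    and cent: "\<forall>y\<in>carrier G. z \<otimes>\<^bsub>G\<^esub> y = y \<otimes>\<^bsub>G\<^esub> z"
  shows "\<forall>y\<in>carrier H. \<phi> z \<otimes>\<^bsub>H\<^esub> y = y \<otimes>\<^bsub>H\<^esub> \<phi> z"
proof
  interpret G: group G by fact
  interpret H: group H by fact
  have hom: "\<phi> \<in> hom G H" and bij: "bij_betw \<phi> (carrier G) (carrier H)" using phi by (auto simp: iso_def)
  interpret gh: group_hom G H \<phi> using hom G H by (simp add: group_hom_def group_hom_axioms_def)
  fix y assume "y \<in> carrier H"
  then obtain x where x: "x \<in> carrier G" "y = \<phi> x" using bij by (auto simp: bij_betw_def)
  then show "\<phi> z \<otimes>\<^bsub>H\<^esub> y = y \<otimes>\<^bsub>H\<^esub> \<phi> z"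
    using cent z by (metis gh.hom_mult)
qed


section \<open>Lines in the centre\<close>

definition Wt :: "bool \<Rightarrow> bool \<Rightarrow> bool \<Rightarrow> bool \<Rightarrow> bool \<Rightarrow> nat" where
  "Wt b0 b1 b2 b3 b4 = (if b0 then 1 else 0) + (if b1 then 2 else 0) + (if b2 then 3 else 0)
     + (if b3 then 4 else 0) + (if b4 then 9 else 0)"

lemma mcount: "card {i. i < 19 \<and> inl p (wpt a b (lab i)) u}
   = Wt (inl p (wpt a b 0) u) (inl p (wpt a b 1) u) (inl p (wpt a b 2) u) (inl p (wpt a b 3) u) (inl p (wpt a b 4) u)"
  unfolding Wt_def by (rule card_lab)

lemma wpt_frame: "j < 4 \<Longrightarrow> wpt a b j = wpt a' b' j"
  by (rule ext) (simp add: wpt_def)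

lemma inl_self: "inl p w w"
  unfolding inl_def by (rule exI[of _ 1]) simp

lemma excl_gen:
  assumes p: "Factorial_Ring.prime p" and h1: "inl p w u" and h2: "inl p w' u"
    and c: "c < 3" "w c = 1" "w' c = 0" and c': "c' < 3" "w' c' = 1"
  shows False
proof -
  have p1: "int p > 1" using p prime_gt_1_nat by simp
  obtain n :: nat where n: "\<forall>c<3. w c mod int p = (int n * u c) mod int p" using h1 by (auto simp: inl_def)
  obtain n' :: nat where n': "\<forall>c<3. w' c mod int p = (int n' * u c) mod int p" using h2 by (auto simp: inl_def)
  have "int n' mod int p = (int n' * w c) mod int p" using c by simp
  also have "\<dots> = (int n' * (int n * u c)) mod int p" using n c(1) by (metis mod_mult_right_eq)
  also have "\<dots> = (int n * (int n' * u c)) mod int p" by (simp add: algebra_simps)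
  also have "\<dots> = (int n * w' c) mod int p" using n' c(1) by (metis mod_mult_right_eq)
  also have "\<dots> = 0" using c by simp
  finally have n'0: "int n' mod int p = 0" .
  have "1 mod int p = w' c' mod int p" using c' by simp
  also have "\<dots> = (int n' * u c') mod int p" using n' c' by metis
  also have "\<dots> = ((int n' mod int p) * u c') mod int p" by (simp add: mod_mult_left_eq)
  also have "\<dots> = 0" using n'0 by simp
  finally show False using p1 by simp
qed

lemma frame_wit:
  assumes "j < 4" "j' < 4" "j \<noteq> j'"
  shows "\<exists>c<3. (wpt a b j c = 1 \<and> wpt a b j' c = 0) \<or> (wpt a b j c = 0 \<and> wpt a b j' c = 1)"
proof -
  have "j = 0 \<or> j = 1 \<or> j = 2 \<or> j = 3" "j' = 0 \<or> j' = 1 \<or> j' = 2 \<or> j' = 3" using assms by auto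
  moreover have ex3: "\<And>P. (\<exists>c<3. P c) \<longleftrightarrow> P 0 \<or> P 1 \<or> P (2::nat)"
  proof -
    fix P :: "nat \<Rightarrow> bool"
    show "(\<exists>c<3. P c) \<longleftrightarrow> P 0 \<or> P 1 \<or> P (2::nat)"
    proof
      assume "\<exists>c<3. P c"
      then obtain c where "c < 3" "P c" by blast
      moreover then have "c = 0 \<or> c = 1 \<or> c = 2" by linarith
      ultimately show "P 0 \<or> P 1 \<or> P 2" by blast
    next
      assume "P 0 \<or> P 1 \<or> P 2"
      moreover have "(0::nat) < 3" "(1::nat) < 3" "(2::nat) < 3" by simp_all
      ultimately show "\<exists>c<3. P c" by blast
    qed
  qed
  ultimately show ?thesis using assms(3)
    by (elim disjE) (simp_all only: ex3, simp_all add: wpt_def)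
qed

lemma frame_excl:
  assumes p: "Factorial_Ring.prime p" and j: "j < 4" "j' < 4" "j \<noteq> j'"
    and h1: "inl p (wpt a b j) u" and h2: "inl p (wpt a b j') u"
  shows False
proof -
  obtain c where c: "c < 3" "(wpt a b j c = 1 \<and> wpt a b j' c = 0) \<or> (wpt a b j c = 0 \<and> wpt a b j' c = 1)"
    using frame_wit[OF j] by blast
  obtain c1 where c1: "c1 < 3" "wpt a b j c1 = 1" using wpt_one by blast
  obtain c2 where c2: "c2 < 3" "wpt a b j' c2 = 1" using wpt_one by blast
  from c(2) show False
  proof
    assume "wpt a b j c = 1 \<and> wpt a b j' c = 0"
    then show False using excl_gen[OF p h1 h2 c(1) _ _ c2] by blast
  next
    assume "wpt a b j c = 0 \<and> wpt a b j' c = 1"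
    then show False using excl_gen[OF p h2 h1 c(1) _ _ c1] by blast
  qed
qed

lemma inl_inv:
  assumes p: "Factorial_Ring.prime p" and h: "inl p w u" and c0: "c0 < 3" "w c0 = 1"
  shows "\<exists>s::nat. int s mod int p \<noteq> 0 \<and> (\<forall>c<3. u c mod int p = (int s * w c) mod int p)"
proof -
  have p1: "int p > 1" using p prime_gt_1_nat by simp
  obtain n :: nat where n: "\<forall>c<3. w c mod int p = (int n * u c) mod int p" using h by (auto simp: inl_def)
  have nz: "int n mod int p \<noteq> 0"
  proof
    assume n0: "int n mod int p = 0"
    have "1 mod int p = (int n * u c0) mod int p" using n c0 by metis
    also have "\<dots> = ((int n mod int p) * u c0) mod int p" by (simp add: mod_mult_left_eq)
    also have "\<dots> = 0" using n0 by simp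
    finally show False using p1 by simp
  qed
  obtain s :: nat where s: "(int s * int n) mod int p = 1" using modinv[OF p nz] by blast
  have snz: "int s mod int p \<noteq> 0"
  proof
    assume "int s mod int p = 0"
    then have "(int s * int n) mod int p = 0" by (simp add: mod_mult_left_eq[symmetric])
    then show False using s by simp
  qed
  have "\<forall>c<3. u c mod int p = (int s * w c) mod int p"
  proof (intro allI impI)
    fix c :: nat assume c: "c < 3"
    have "u c mod int p = (((int s * int n) mod int p) * u c) mod int p" using s by simp
    also have "\<dots> = (int s * (int n * u c)) mod int p" by (simp add: mod_mult_left_eq mult.assoc)
    also have "\<dots> = (int s * ((int n * u c) mod int p)) mod int p" by (simp add: mod_mult_right_eq)
    also have "\<dots> = (int s * (w c mod int p)) mod int p" using n c by simp
    also have "\<dots> = (int s * w c) mod int p" by (simp add: mod_mult_right_eq)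
    finally show "u c mod int p = (int s * w c) mod int p" .
  qed
  then show ?thesis using snz by blast
qed


lemma Wt_frame:
  fixes B C :: "nat \<Rightarrow> bool"
  assumes j: "j < 4" and B: "\<forall>k<4. k \<noteq> j \<longrightarrow> \<not> B k" "B j"
    and C: "\<forall>k<4. \<forall>k'<4. k \<noteq> k' \<longrightarrow> \<not> (C k \<and> C k')"
    and eq: "Wt (B 0) (B 1) (B 2) (B 3) (B 4) = Wt (C 0) (C 1) (C 2) (C 3) (C 4)"
  shows "C j"
proof -
  have C': "\<not> (C 0 \<and> C 1)" "\<not> (C 0 \<and> C 2)" "\<not> (C 0 \<and> C 3)" "\<not> (C 1 \<and> C 2)" "\<not> (C 1 \<and> C 3)" "\<not> (C 2 \<and> C 3)"
    using C[rule_format, of 0 1] C[rule_format, of 0 2] C[rule_format, of 0 3]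
      C[rule_format, of 1 2] C[rule_format, of 1 3] C[rule_format, of 2 3] by simp_all
  have "j = 0 \<or> j = 1 \<or> j = 2 \<or> j = 3" using j by auto
  then show ?thesis
  proof (elim disjE)
    assume j0: "j = 0"
    then have "\<not> B 1" "\<not> B 2" "\<not> B 3" "B 0" using B by auto
    then show ?thesis using eq C' j0 unfolding Wt_def by (auto split: if_splits)
  next
    assume j0: "j = 1"
    then have "\<not> B 0" "\<not> B 2" "\<not> B 3" "B 1" using B by auto
    then show ?thesis using eq C' j0 unfolding Wt_def by (auto split: if_splits)
  next
    assume j0: "j = 2"
    then have "\<not> B 1" "\<not> B 0" "\<not> B 3" "B 2" using B by auto
    then show ?thesis using eq C' j0 unfolding Wt_def by (auto split: if_splits)
  next
    assume j0: "j = 3"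
    then have "\<not> B 1" "\<not> B 2" "\<not> B 0" "B 3" using B by auto
    then show ?thesis using eq C' j0 unfolding Wt_def by (auto split: if_splits)
  qed
qed

lemma Wt_four:
  fixes B C :: "nat \<Rightarrow> bool"
  assumes B: "B 4"
    and C: "\<forall>k<4. \<forall>k'<4. k \<noteq> k' \<longrightarrow> \<not> (C k \<and> C k')"
    and eq: "Wt (B 0) (B 1) (B 2) (B 3) (B 4) = Wt (C 0) (C 1) (C 2) (C 3) (C 4)"
  shows "C 4"
proof -
  have C': "\<not> (C 0 \<and> C 1)" "\<not> (C 0 \<and> C 2)" "\<not> (C 0 \<and> C 3)" "\<not> (C 1 \<and> C 2)" "\<not> (C 1 \<and> C 3)" "\<not> (C 2 \<and> C 3)"
    using C[rule_format, of 0 1] C[rule_format, of 0 2] C[rule_format, of 0 3]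
      C[rule_format, of 1 2] C[rule_format, of 1 3] C[rule_format, of 2 3] by simp_all
  show ?thesis using eq C' B unfolding Wt_def by (auto split: if_splits)
qed

lemma phi_line:
  assumes p: "Factorial_Ring.prime p" and iso: "\<phi> \<in> iso (grp p a b) (grp p a' b')"
  shows "\<exists>u. \<phi> (cen p w) = cen p u \<and>
     card {i. i < 19 \<and> inl p (wpt a' b' (lab i)) u} = card {i. i < 19 \<and> inl p (wpt a b (lab i)) w}"
proof -
  have G: "group (grp p a b)" and H: "group (grp p a' b')" by (rule grp_group)+
  have p1: "p > 1" using p prime_gt_1_nat by blast
  have z: "cen p w \<in> carrier (grp p a b)" by simp
  have "\<forall>y\<in>carrier (grp p a b). cen p w \<otimes>\<^bsub>grp p a b\<^esub> y = y \<otimes>\<^bsub>grp p a b\<^esub> cen p w"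
    using cen_central' by blast
  then have cent: "\<forall>y\<in>carrier (grp p a' b'). \<phi> (cen p w) \<otimes>\<^bsub>grp p a' b'\<^esub> y = y \<otimes>\<^bsub>grp p a' b'\<^esub> \<phi> (cen p w)"
    by (rule iso_central[OF G H iso z])
  have "\<phi> (cen p w) \<in> carrier (grp p a' b')"
    using iso z by (auto simp: iso_def hom_def)
  then obtain u where u: "\<phi> (cen p w) = cen p u" using central_is_cen[OF p _ cent] by blast
  have "card (Tset (grp p a' b') (cen p u)) = card (Tset (grp p a b) (cen p w))"
    using iso_Tset_card[OF G H iso z] u by simp
  then have "p ^ (3 + 2 * card {i. i < 19 \<and> inl p (wpt a' b' (lab i)) u})
      = p ^ (3 + 2 * card {i. i < 19 \<and> inl p (wpt a b (lab i)) w})"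
    by (simp add: Tset_card[OF p])
  then have "card {i. i < 19 \<and> inl p (wpt a' b' (lab i)) u} = card {i. i < 19 \<and> inl p (wpt a b (lab i)) w}"
    using p1 by (simp add: power_inject_exp)
  then show ?thesis using u by blast
qed

lemma phi_frame:
  assumes p: "Factorial_Ring.prime p" and iso: "\<phi> \<in> iso (grp p a b) (grp p a' b')" and j: "j < 4"
  shows "\<exists>s::nat. int s mod int p \<noteq> 0 \<and> \<phi> (cen p (wpt a b j)) = cen p (\<lambda>c. int s * wpt a b j c)"
proof -
  obtain u where u: "\<phi> (cen p (wpt a b j)) = cen p u"
    and eq: "card {i. i < 19 \<and> inl p (wpt a' b' (lab i)) u} = card {i. i < 19 \<and> inl p (wpt a b (lab i)) (wpt a b j)}"
    using phi_line[OF p iso] by blast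
  define B where "B k = inl p (wpt a b k) (wpt a b j)" for k
  define C where "C k = inl p (wpt a' b' k) u" for k
  have Bj: "B j" unfolding B_def by (rule inl_self)
  have Bo: "\<forall>k<4. k \<noteq> j \<longrightarrow> \<not> B k"
    using frame_excl[OF p _ j, of _ a b "wpt a b j"] inl_self unfolding B_def by blast
  have Cx: "\<forall>k<4. \<forall>k'<4. k \<noteq> k' \<longrightarrow> \<not> (C k \<and> C k')"
    using frame_excl[OF p, of _ _ a' b' u] unfolding C_def by blast
  have "Wt (B 0) (B 1) (B 2) (B 3) (B 4) = Wt (C 0) (C 1) (C 2) (C 3) (C 4)"
    using eq unfolding B_def C_def mcount by simp
  then have "C j" using Wt_frame[of j B C] j Bo Bj Cx by blast
  then have "inl p (wpt a b j) u" unfolding C_def using wpt_frame[OF j, of a' b' a b] by simp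
  moreover obtain c0 where "c0 < 3" "wpt a b j c0 = 1" using wpt_one by blast
  ultimately obtain s :: nat where s: "int s mod int p \<noteq> 0" "\<forall>c<3. u c mod int p = (int s * wpt a b j c) mod int p"
    using inl_inv[OF p] by blast
  have "cen p u = cen p (\<lambda>c. int s * wpt a b j c)" using s(2) by (simp add: cen_eq)
  then show ?thesis using u s(1) by auto
qed

lemma phi_four:
  assumes p: "Factorial_Ring.prime p" and iso: "\<phi> \<in> iso (grp p a b) (grp p a' b')"
  shows "\<exists>u. \<phi> (cen p (wpt a b 4)) = cen p u \<and> inl p (wpt a' b' 4) u"
proof -
  obtain u where u: "\<phi> (cen p (wpt a b 4)) = cen p u"
    and eq: "card {i. i < 19 \<and> inl p (wpt a' b' (lab i)) u} = card {i. i < 19 \<and> inl p (wpt a b (lab i)) (wpt a b 4)}"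
    using phi_line[OF p iso] by blast
  define B where "B k = inl p (wpt a b k) (wpt a b 4)" for k
  define C where "C k = inl p (wpt a' b' k) u" for k
  have B4: "B 4" unfolding B_def by (rule inl_self)
  have Cx: "\<forall>k<4. \<forall>k'<4. k \<noteq> k' \<longrightarrow> \<not> (C k \<and> C k')"
    using frame_excl[OF p, of _ _ a' b' u] unfolding C_def by blast
  have "Wt (B 0) (B 1) (B 2) (B 3) (B 4) = Wt (C 0) (C 1) (C 2) (C 3) (C 4)"
    using eq unfolding B_def C_def mcount by simp
  then have "C 4" using Wt_four[of B C] B4 Cx by blast
  then show ?thesis using u unfolding C_def by blast
qed


lemma all3: "(\<forall>c<3. P c) \<longleftrightarrow> P 0 \<and> P 1 \<and> P (2::nat)"
proof
  assume "P 0 \<and> P 1 \<and> P 2"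
  then show "\<forall>c<3. P c"
  proof (intro allI impI)
    fix c :: nat assume "c < 3"
    then have "c = 0 \<or> c = 1 \<or> c = 2" by linarith
    then show "P c" using \<open>P 0 \<and> P 1 \<and> P 2\<close> by blast
  qed
qed simp

lemma modcong_mult: "x mod m = y mod m \<Longrightarrow> (k * x) mod m = (k * y) mod (m::int)"
  by (rule mod_mult_cong[OF refl])

lemma noniso:
  assumes p: "Factorial_Ring.prime p"
    and ab: "0 \<le> a" "a < int p" "0 \<le> b" "b < int p" "0 \<le> a'" "a' < int p" "0 \<le> b'" "b' < int p"
    and iso: "\<phi> \<in> iso (grp p a b) (grp p a' b')"
  shows "a = a' \<and> b = b'"
proof -
  interpret G: group "grp p a b" by (rule grp_group)
  interpret H: group "grp p a' b'" by (rule grp_group)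
  interpret gh: group_hom "grp p a b" "grp p a' b'" \<phi>
    using iso grp_group by (simp add: group_hom_def group_hom_axioms_def iso_def)
  have j4: "(0::nat) < 4" "(1::nat) < 4" "(2::nat) < 4" "(3::nat) < 4" by simp_all
  obtain s0 :: nat where s0: "\<phi> (cen p (wpt a b 0)) = cen p (\<lambda>c. int s0 * wpt a b 0 c)"
    using phi_frame[OF p iso j4(1)] by blast
  obtain s1 :: nat where s1: "\<phi> (cen p (wpt a b 1)) = cen p (\<lambda>c. int s1 * wpt a b 1 c)"
    using phi_frame[OF p iso j4(2)] by blast
  obtain s2 :: nat where s2: "\<phi> (cen p (wpt a b 2)) = cen p (\<lambda>c. int s2 * wpt a b 2 c)"
    using phi_frame[OF p iso j4(3)] by blast
  obtain s3 :: nat where s3: "\<phi> (cen p (wpt a b 3)) = cen p (\<lambda>c. int s3 * wpt a b 3 c)"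
    using phi_frame[OF p iso j4(4)] by blast
  have z3: "cen p (wpt a b 3) = cen p (wpt a b 0) \<otimes>\<^bsub>grp p a b\<^esub> cen p (wpt a b 1) \<otimes>\<^bsub>grp p a b\<^esub> cen p (wpt a b 2)"
    by (simp add: cen_mult cen_eq all3 wpt_def)
  have "\<phi> (cen p (wpt a b 3)) = cen p (\<lambda>c. int s0 * wpt a b 0 c) \<otimes>\<^bsub>grp p a' b'\<^esub> cen p (\<lambda>c. int s1 * wpt a b 1 c)
      \<otimes>\<^bsub>grp p a' b'\<^esub> cen p (\<lambda>c. int s2 * wpt a b 2 c)"
    unfolding z3 by (simp only: gh.hom_mult cen_carrier G.m_closed s0 s1 s2)
  then have "cen p (\<lambda>c. int s3 * wpt a b 3 c) = cen p (\<lambda>c. int s0 * wpt a b 0 c + int s1 * wpt a b 1 c + int s2 * wpt a b 2 c)"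
    using s3 by (simp add: cen_mult)
  then have ss: "int s0 mod int p = int s3 mod int p" "int s1 mod int p = int s3 mod int p"
      "int s2 mod int p = int s3 mod int p"
    by (simp_all add: cen_eq all3 wpt_def)
  have z4: "cen p (wpt a b 4) = cen p (wpt a b 0) \<otimes>\<^bsub>grp p a b\<^esub> cen p (wpt a b 1) [^]\<^bsub>grp p a b\<^esub> nat a
      \<otimes>\<^bsub>grp p a b\<^esub> cen p (wpt a b 2) [^]\<^bsub>grp p a b\<^esub> nat b"
    using ab by (simp add: cen_mult cen_pow cen_eq all3 wpt_def)
  have "\<phi> (cen p (wpt a b 4)) = cen p (\<lambda>c. int s0 * wpt a b 0 c) \<otimes>\<^bsub>grp p a' b'\<^esub>
      cen p (\<lambda>c. int s1 * wpt a b 1 c) [^]\<^bsub>grp p a' b'\<^esub> nat a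
      \<otimes>\<^bsub>grp p a' b'\<^esub> cen p (\<lambda>c. int s2 * wpt a b 2 c) [^]\<^bsub>grp p a' b'\<^esub> nat b"
    unfolding z4 by (simp only: gh.hom_mult cen_carrier G.m_closed G.nat_pow_closed s0 s1 s2 gh.hom_nat_pow)
  also have "\<dots> = cen p (\<lambda>c. int s0 * wpt a b 0 c + int (nat a) * (int s1 * wpt a b 1 c)
      + int (nat b) * (int s2 * wpt a b 2 c))"
    by (simp add: cen_mult cen_pow)
  finally have phi4: "\<phi> (cen p (wpt a b 4)) = cen p (\<lambda>c. int s0 * wpt a b 0 c + a * (int s1 * wpt a b 1 c)
      + b * (int s2 * wpt a b 2 c))" using ab by simp
  obtain u where u: "\<phi> (cen p (wpt a b 4)) = cen p u" and ul: "inl p (wpt a' b' 4) u"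
    using phi_four[OF p iso] by blast
  obtain n :: nat where n: "\<forall>c<3. wpt a' b' 4 c mod int p = (int n * u c) mod int p"
    using ul by (auto simp: inl_def)
  have uc: "u 0 mod int p = int s0 mod int p" "u 1 mod int p = (a * int s1) mod int p"
      "u 2 mod int p = (b * int s2) mod int p"
    using u phi4 by (simp_all add: cen_eq all3 wpt_def)
  have n0: "1 mod int p = (int n * u 0) mod int p" using n[rule_format, of 0] by (simp add: wpt_def)
  also have "\<dots> = (int n * int s0) mod int p" using uc(1) by (rule modcong_mult)
  finally have ns0: "(int n * int s0) mod int p = 1 mod int p" by simp
  have ns: "(int n * int s1) mod int p = 1 mod int p" "(int n * int s2) mod int p = 1 mod int p"
  proof -
    have "(int n * int s1) mod int p = (int n * int s0) mod int p"
      by (rule modcong_mult) (simp add: ss)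
    then show "(int n * int s1) mod int p = 1 mod int p" using ns0 by simp
    have "(int n * int s2) mod int p = (int n * int s0) mod int p"
      by (rule modcong_mult) (simp add: ss)
    then show "(int n * int s2) mod int p = 1 mod int p" using ns0 by simp
  qed
  have "a' mod int p = (int n * u 1) mod int p" using n[rule_format, of 1] by (simp add: wpt_def)
  also have "\<dots> = (int n * (a * int s1)) mod int p" using uc(2) by (rule modcong_mult)
  also have "\<dots> = (a * (int n * int s1)) mod int p" by (simp add: algebra_simps)
  also have "\<dots> = (a * 1) mod int p" using ns(1) by (rule modcong_mult)
  finally have "a' mod int p = a mod int p" by simp
  then have aa: "a' = a" using ab by simp
  have "b' mod int p = (int n * u 2) mod int p" using n[rule_format, of 2] by (simp add: wpt_def)
  also have "\<dots> = (int n * (b * int s2)) mod int p" using uc(3) by (rule modcong_mult)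
  also have "\<dots> = (b * (int n * int s2)) mod int p" by (simp add: algebra_simps)
  also have "\<dots> = (b * 1) mod int p" using ns(2) by (rule modcong_mult)
  finally have "b' mod int p = b mod int p" by simp
  then have bb: "b' = b" using ab by simp
  show ?thesis using aa bb by simp
qed


section \<open>Indecomposability\<close>

lemma subgroup_pow_closed:
  assumes "subgroup S G" "x \<in> S"
  shows "x [^]\<^bsub>G\<^esub> (n::nat) \<in> S"
proof (induction n)
  case 0
  then show ?case using assms by (simp add: subgroup.one_closed)
next
  case (Suc n)
  then show ?case using assms by (simp add: subgroup.m_closed)
qed

lemma normal_cm:
  assumes N: "N \<lhd> G" and h: "h \<in> N" and g: "g \<in> carrier G"
  shows "cm G h g \<in> N"
proof -
  interpret normal N G by fact
  have hc: "h \<in> carrier G" using h subset by blast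
  have "g \<otimes>\<^bsub>G\<^esub> inv\<^bsub>G\<^esub> h \<otimes>\<^bsub>G\<^esub> inv\<^bsub>G\<^esub> g \<in> N"
    using inv_op_closed2[OF g] h by simp
  then have "h \<otimes>\<^bsub>G\<^esub> (g \<otimes>\<^bsub>G\<^esub> inv\<^bsub>G\<^esub> h \<otimes>\<^bsub>G\<^esub> inv\<^bsub>G\<^esub> g) \<in> N"
    using h by simp
  then show ?thesis unfolding cm_def using hc g by (simp add: m_assoc)
qed

lemma cm_one_comm:
  assumes "group G" "x \<in> carrier G" "y \<in> carrier G" "cm G x y = \<one>\<^bsub>G\<^esub>"
  shows "x \<otimes>\<^bsub>G\<^esub> y = y \<otimes>\<^bsub>G\<^esub> x"
proof -
  interpret group G by fact
  have "x \<otimes>\<^bsub>G\<^esub> y = cm G x y \<otimes>\<^bsub>G\<^esub> (y \<otimes>\<^bsub>G\<^esub> x)"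
  proof -
    have "inv\<^bsub>G\<^esub> y \<otimes>\<^bsub>G\<^esub> (y \<otimes>\<^bsub>G\<^esub> x) = x"
      using assms(2,3) by (simp add: m_assoc[symmetric])
    then show ?thesis unfolding cm_def using assms(2,3) by (simp add: m_assoc)
  qed
  then show ?thesis using assms by simp
qed

lemma line_in:
  assumes p: "Factorial_Ring.prime p" and S: "subgroup S (grp p a b)"
    and t: "t mod int p \<noteq> 0" and h: "cen p (\<lambda>c. t * w c) \<in> S"
  shows "cen p w \<in> S"
proof -
  obtain s :: nat where s: "(int s * t) mod int p = 1" using modinv[OF p t] by blast
  have "cen p (\<lambda>c. t * w c) [^]\<^bsub>grp p a b\<^esub> s \<in> S" by (rule subgroup_pow_closed[OF S h])
  moreover have "cen p (\<lambda>c. t * w c) [^]\<^bsub>grp p a b\<^esub> s = cen p w"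
    unfolding cen_pow cen_eq
  proof (intro allI impI)
    fix c :: nat
    have "(int s * (t * w c)) mod int p = (((int s * t) mod int p) * w c) mod int p"
      by (simp add: mod_mult_left_eq mult.assoc)
    then show "(int s * (t * w c)) mod int p = w c mod int p" using s by simp
  qed
  ultimately show ?thesis by simp
qed

lemma cen_diff_in:
  assumes S: "subgroup S (grp p a b)" and "cen p u \<in> S" "cen p v \<in> S"
  shows "cen p (\<lambda>c. u c - v c) \<in> S" "cen p (\<lambda>c. u c + v c) \<in> S"
proof -
  have "inv\<^bsub>grp p a b\<^esub> (cen p v) \<in> S" using assms by (simp add: subgroup.m_inv_closed)
  then have "cen p u \<otimes>\<^bsub>grp p a b\<^esub> inv\<^bsub>grp p a b\<^esub> (cen p v) \<in> S"
    using assms by (simp add: subgroup.m_closed)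
  then show "cen p (\<lambda>c. u c - v c) \<in> S" by (simp add: cen_inv cen_mult)
  have "cen p u \<otimes>\<^bsub>grp p a b\<^esub> cen p v \<in> S" using assms by (simp add: subgroup.m_closed)
  then show "cen p (\<lambda>c. u c + v c) \<in> S" by (simp add: cen_mult)
qed

lemma cen_cong_in:
  assumes "cen p u \<in> S" "\<forall>c<3. u c mod int p = v c mod int p"
  shows "cen p v \<in> S"
  using assms by (metis cen_eq)

lemma all_from_012:
  assumes p: "Factorial_Ring.prime p" and S: "subgroup S (grp p a b)"
    and h: "cen p (wpt a b 0) \<in> S" "cen p (wpt a b 1) \<in> S" "cen p (wpt a b 2) \<in> S"
  shows "cen p u \<in> S"
proof -
  have p0: "int p > 0" using p prime_gt_0_nat by simp
  let ?G = "grp p a b"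
  define n0 where "n0 = nat (u 0 mod int p)"
  define n1 where "n1 = nat (u 1 mod int p)"
  define n2 where "n2 = nat (u 2 mod int p)"
  have "cen p (wpt a b 0) [^]\<^bsub>?G\<^esub> n0 \<otimes>\<^bsub>?G\<^esub> cen p (wpt a b 1) [^]\<^bsub>?G\<^esub> n1
      \<otimes>\<^bsub>?G\<^esub> cen p (wpt a b 2) [^]\<^bsub>?G\<^esub> n2 \<in> S"
    using h subgroup_pow_closed[OF S] by (simp add: subgroup.m_closed[OF S])
  moreover have "cen p (wpt a b 0) [^]\<^bsub>?G\<^esub> n0 \<otimes>\<^bsub>?G\<^esub> cen p (wpt a b 1) [^]\<^bsub>?G\<^esub> n1
      \<otimes>\<^bsub>?G\<^esub> cen p (wpt a b 2) [^]\<^bsub>?G\<^esub> n2 = cen p u"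
    using p0 by (simp add: cen_pow cen_mult cen_eq all3 wpt_def n0_def n1_def n2_def)
  ultimately show ?thesis by simp
qed

lemma three_all:
  assumes p: "Factorial_Ring.prime p" and S: "subgroup S (grp p a b)"
  shows "cen p (wpt a b 0) \<in> S \<and> cen p (wpt a b 1) \<in> S \<and> cen p (wpt a b 2) \<in> S \<longrightarrow> (\<forall>u. cen p u \<in> S)"
    "cen p (wpt a b 0) \<in> S \<and> cen p (wpt a b 1) \<in> S \<and> cen p (wpt a b 3) \<in> S \<longrightarrow> (\<forall>u. cen p u \<in> S)"
    "cen p (wpt a b 0) \<in> S \<and> cen p (wpt a b 2) \<in> S \<and> cen p (wpt a b 3) \<in> S \<longrightarrow> (\<forall>u. cen p u \<in> S)"
    "cen p (wpt a b 1) \<in> S \<and> cen p (wpt a b 2) \<in> S \<and> cen p (wpt a b 3) \<in> S \<longrightarrow> (\<forall>u. cen p u \<in> S)"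
proof -
  show "cen p (wpt a b 0) \<in> S \<and> cen p (wpt a b 1) \<in> S \<and> cen p (wpt a b 2) \<in> S \<longrightarrow> (\<forall>u. cen p u \<in> S)"
    using all_from_012[OF p S] by blast
  show "cen p (wpt a b 0) \<in> S \<and> cen p (wpt a b 1) \<in> S \<and> cen p (wpt a b 3) \<in> S \<longrightarrow> (\<forall>u. cen p u \<in> S)"
  proof (intro impI allI, elim conjE)
    fix u assume h: "cen p (wpt a b 0) \<in> S" "cen p (wpt a b 1) \<in> S" "cen p (wpt a b 3) \<in> S"
    have "cen p (\<lambda>c. wpt a b 3 c - wpt a b 0 c) \<in> S" using cen_diff_in(1)[OF S h(3) h(1)] .
    then have "cen p (\<lambda>c. (wpt a b 3 c - wpt a b 0 c) - wpt a b 1 c) \<in> S" using cen_diff_in(1)[OF S _ h(2)] by blast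
    then have "cen p (wpt a b 2) \<in> S" by (rule cen_cong_in) (simp add: all3 wpt_def)
    then show "cen p u \<in> S" using all_from_012[OF p S h(1,2)] by blast
  qed
  show "cen p (wpt a b 0) \<in> S \<and> cen p (wpt a b 2) \<in> S \<and> cen p (wpt a b 3) \<in> S \<longrightarrow> (\<forall>u. cen p u \<in> S)"
  proof (intro impI allI, elim conjE)
    fix u assume h: "cen p (wpt a b 0) \<in> S" "cen p (wpt a b 2) \<in> S" "cen p (wpt a b 3) \<in> S"
    have "cen p (\<lambda>c. wpt a b 3 c - wpt a b 0 c) \<in> S" using cen_diff_in(1)[OF S h(3) h(1)] .
    then have "cen p (\<lambda>c. (wpt a b 3 c - wpt a b 0 c) - wpt a b 2 c) \<in> S" using cen_diff_in(1)[OF S _ h(2)] by blast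
    then have "cen p (wpt a b 1) \<in> S" by (rule cen_cong_in) (simp add: all3 wpt_def)
    then show "cen p u \<in> S" using all_from_012[OF p S h(1) _ h(2)] by blast
  qed
  show "cen p (wpt a b 1) \<in> S \<and> cen p (wpt a b 2) \<in> S \<and> cen p (wpt a b 3) \<in> S \<longrightarrow> (\<forall>u. cen p u \<in> S)"
  proof (intro impI allI, elim conjE)
    fix u assume h: "cen p (wpt a b 1) \<in> S" "cen p (wpt a b 2) \<in> S" "cen p (wpt a b 3) \<in> S"
    have "cen p (\<lambda>c. wpt a b 3 c - wpt a b 1 c) \<in> S" using cen_diff_in(1)[OF S h(3) h(1)] .
    then have "cen p (\<lambda>c. (wpt a b 3 c - wpt a b 1 c) - wpt a b 2 c) \<in> S" using cen_diff_in(1)[OF S _ h(2)] by blast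
    then have "cen p (wpt a b 0) \<in> S" by (rule cen_cong_in) (simp add: all3 wpt_def)
    then show "cen p u \<in> S" using all_from_012[OF p S _ h(1,2)] by blast
  qed
qed


lemma frame_split:
  assumes p: "Factorial_Ring.prime p" and H: "H \<lhd> grp p a b" and K: "K \<lhd> grp p a b"
    and HK: "H <#>\<^bsub>grp p a b\<^esub> K = carrier (grp p a b)" and i: "i < 19"
  shows "cen p (wpt a b (lab i)) \<in> H \<or> cen p (wpt a b (lab i)) \<in> K"
proof -
  have p1: "int p > 1" using p prime_gt_1_nat by simp
  have Hs: "subgroup H (grp p a b)" and Ks: "subgroup K (grp p a b)"
    using H K normal_imp_subgroup by blast+
  have "enc p (Ev (2*i)) \<in> H <#>\<^bsub>grp p a b\<^esub> K" using HK by (simp add: carrier_grp)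
  then obtain h k where h: "h \<in> H" and k: "k \<in> K" and e: "enc p (Ev (2*i)) = h \<otimes>\<^bsub>grp p a b\<^esub> k"
    unfolding set_mult_def by blast
  have "h \<in> carrier (grp p a b)" "k \<in> carrier (grp p a b)"
    using h k Hs Ks subgroup.subset by blast+
  then obtain f g where f: "h = enc p f" and g: "k = enc p g" by (auto simp: carrier_grp)
  have "enc p (Ev (2*i)) = enc p (prodf a b f g)" using e f g by (simp add: mult_enc)
  then have "Ev (2*i) (2*i) mod int p = prodf a b f g (2*i) mod int p"
    using i unfolding enc_eq by simp
  then have sum1: "(f (2*i) + g (2*i)) mod int p = 1" using i p1 by (simp add: Ev_def prodf_def)
  show ?thesis
  proof (cases "f (2*i) mod int p = 0")
    case False
    have "cm (grp p a b) h (enc p (Ev (2*i+1))) \<in> H"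
      by (rule normal_cm[OF H h]) (simp add: carrier_grp)
    then have "cen p (\<lambda>c. f (2*i) * wpt a b (lab i) c) \<in> H" using cm_Ev_odd[OF i] f by simp
    then have "cen p (wpt a b (lab i)) \<in> H" by (rule line_in[OF p Hs False])
    then show ?thesis by blast
  next
    case True
    then have gnz: "g (2*i) mod int p \<noteq> 0" using sum1 by (simp add: mod_add_left_eq[symmetric])
    have "cm (grp p a b) k (enc p (Ev (2*i+1))) \<in> K"
      by (rule normal_cm[OF K k]) (simp add: carrier_grp)
    then have "cen p (\<lambda>c. g (2*i) * wpt a b (lab i) c) \<in> K" using cm_Ev_odd[OF i] g by simp
    then have "cen p (wpt a b (lab i)) \<in> K" by (rule line_in[OF p Ks gnz])
    then show ?thesis by blast
  qed
qed

lemma central_all_contra: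
  assumes p: "Factorial_Ring.prime p" and H: "H \<lhd> grp p a b" and K: "K \<lhd> grp p a b"
    and HK: "H \<inter> K = {\<one>\<^bsub>grp p a b\<^esub>}" and all: "\<forall>u. cen p u \<in> H" and Kn: "K \<noteq> {\<one>\<^bsub>grp p a b\<^esub>}"
  shows False
proof -
  interpret G: group "grp p a b" by (rule grp_group)
  have Ks: "subgroup K (grp p a b)" using K normal_imp_subgroup by blast
  have "K \<subseteq> {\<one>\<^bsub>grp p a b\<^esub>}"
  proof
    fix k assume k: "k \<in> K"
    then have kc: "k \<in> carrier (grp p a b)" using Ks subgroup.subset by blast
    then obtain f where f: "k = enc p f" by (auto simp: carrier_grp)
    have "\<forall>y\<in>carrier (grp p a b). k \<otimes>\<^bsub>grp p a b\<^esub> y = y \<otimes>\<^bsub>grp p a b\<^esub> k"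
    proof
      fix y assume y: "y \<in> carrier (grp p a b)"
      then obtain g where g: "y = enc p g" by (auto simp: carrier_grp)
      have "cm (grp p a b) k y \<in> K" by (rule normal_cm[OF K k y])
      moreover have "cm (grp p a b) k y \<in> H" using all f g cm_enc by simp
      ultimately have "cm (grp p a b) k y = \<one>\<^bsub>grp p a b\<^esub>" using HK by blast
      then show "k \<otimes>\<^bsub>grp p a b\<^esub> y = y \<otimes>\<^bsub>grp p a b\<^esub> k" by (rule cm_one_comm[OF grp_group kc y])
    qed
    then have "k \<in> range (cen p)" by (rule central_is_cen[OF p kc])
    then have "k \<in> H" using all by auto
    then show "k \<in> {\<one>\<^bsub>grp p a b\<^esub>}" using HK k by blast
  qed
  moreover have "\<one>\<^bsub>grp p a b\<^esub> \<in> K" using Ks subgroup.one_closed by blast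
  ultimately show False using Kn by blast
qed

lemma pair_contra:
  assumes p: "Factorial_Ring.prime p" and S: "subgroup S (grp p a b)" and T: "subgroup T (grp p a b)"
    and ST: "S \<inter> T = {\<one>\<^bsub>grp p a b\<^esub>}"
  shows "\<not> (cen p (wpt a b 0) \<in> S \<and> cen p (wpt a b 1) \<in> S \<and> cen p (wpt a b 2) \<in> T \<and> cen p (wpt a b 3) \<in> T)"
    "\<not> (cen p (wpt a b 0) \<in> S \<and> cen p (wpt a b 2) \<in> S \<and> cen p (wpt a b 1) \<in> T \<and> cen p (wpt a b 3) \<in> T)"
    "\<not> (cen p (wpt a b 0) \<in> S \<and> cen p (wpt a b 3) \<in> S \<and> cen p (wpt a b 1) \<in> T \<and> cen p (wpt a b 2) \<in> T)"
proof -
  have p1: "int p > 1" using p prime_gt_1_nat by simp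
  {
    fix v assume vS: "cen p v \<in> S" and vT: "cen p v \<in> T" and v0: "v 0 = 1"
    then have "cen p v = \<one>\<^bsub>grp p a b\<^esub>" using ST by blast
    then have "v 0 mod int p = 0" by (simp add: one_cen cen_eq)
    then have False using v0 p1 by simp
  } note key = this
  show "\<not> (cen p (wpt a b 0) \<in> S \<and> cen p (wpt a b 1) \<in> S \<and> cen p (wpt a b 2) \<in> T \<and> cen p (wpt a b 3) \<in> T)"
  proof
    assume h: "cen p (wpt a b 0) \<in> S \<and> cen p (wpt a b 1) \<in> S \<and> cen p (wpt a b 2) \<in> T \<and> cen p (wpt a b 3) \<in> T"
    have 1: "cen p (\<lambda>c. wpt a b 0 c + wpt a b 1 c) \<in> S" using cen_diff_in(2)[OF S] h by blast
    have "cen p (\<lambda>c. wpt a b 3 c - wpt a b 2 c) \<in> T" using cen_diff_in(1)[OF T] h by blast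
    then have 2: "cen p (\<lambda>c. wpt a b 0 c + wpt a b 1 c) \<in> T" by (rule cen_cong_in) (simp add: all3 wpt_def)
    show False by (rule key[OF 1 2]) (simp add: wpt_def)
  qed
  show "\<not> (cen p (wpt a b 0) \<in> S \<and> cen p (wpt a b 2) \<in> S \<and> cen p (wpt a b 1) \<in> T \<and> cen p (wpt a b 3) \<in> T)"
  proof
    assume h: "cen p (wpt a b 0) \<in> S \<and> cen p (wpt a b 2) \<in> S \<and> cen p (wpt a b 1) \<in> T \<and> cen p (wpt a b 3) \<in> T"
    have 1: "cen p (\<lambda>c. wpt a b 0 c + wpt a b 2 c) \<in> S" using cen_diff_in(2)[OF S] h by blast
    have "cen p (\<lambda>c. wpt a b 3 c - wpt a b 1 c) \<in> T" using cen_diff_in(1)[OF T] h by blast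
    then have 2: "cen p (\<lambda>c. wpt a b 0 c + wpt a b 2 c) \<in> T" by (rule cen_cong_in) (simp add: all3 wpt_def)
    show False by (rule key[OF 1 2]) (simp add: wpt_def)
  qed
  show "\<not> (cen p (wpt a b 0) \<in> S \<and> cen p (wpt a b 3) \<in> S \<and> cen p (wpt a b 1) \<in> T \<and> cen p (wpt a b 2) \<in> T)"
  proof
    assume h: "cen p (wpt a b 0) \<in> S \<and> cen p (wpt a b 3) \<in> S \<and> cen p (wpt a b 1) \<in> T \<and> cen p (wpt a b 2) \<in> T"
    have 1: "cen p (\<lambda>c. wpt a b 3 c - wpt a b 0 c) \<in> S" using cen_diff_in(1)[OF S] h by blast
    have "cen p (\<lambda>c. wpt a b 1 c + wpt a b 2 c) \<in> T" using cen_diff_in(2)[OF T] h by blast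
    then have 2: "cen p (\<lambda>c. wpt a b 3 c - wpt a b 0 c) \<in> T" by (rule cen_cong_in) (simp add: all3 wpt_def)
    show False
    proof -
      have "cen p (\<lambda>c. wpt a b 3 c - wpt a b 0 c) = \<one>\<^bsub>grp p a b\<^esub>" using 1 2 ST by blast
      then have "(wpt a b 3 1 - wpt a b 0 1) mod int p = 0" by (simp add: one_cen cen_eq)
      then show False using p1 by (simp add: wpt_def)
    qed
  qed
qed

lemma prop16:
  assumes "h0 \<or> k0" "h1 \<or> k1" "h2 \<or> k2" "h3 \<or> k3" "\<not> AH" "\<not> AK"
    "h0 \<and> h1 \<and> h2 \<longrightarrow> AH" "h0 \<and> h1 \<and> h3 \<longrightarrow> AH" "h0 \<and> h2 \<and> h3 \<longrightarrow> AH" "h1 \<and> h2 \<and> h3 \<longrightarrow> AH"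
    "k0 \<and> k1 \<and> k2 \<longrightarrow> AK" "k0 \<and> k1 \<and> k3 \<longrightarrow> AK" "k0 \<and> k2 \<and> k3 \<longrightarrow> AK" "k1 \<and> k2 \<and> k3 \<longrightarrow> AK"
    "\<not> (h0 \<and> h1 \<and> k2 \<and> k3)" "\<not> (h0 \<and> h2 \<and> k1 \<and> k3)" "\<not> (h0 \<and> h3 \<and> k1 \<and> k2)"
    "\<not> (k0 \<and> k1 \<and> h2 \<and> h3)" "\<not> (k0 \<and> k2 \<and> h1 \<and> h3)" "\<not> (k0 \<and> k3 \<and> h1 \<and> h2)"
  shows False
  using assms by (cases h0; cases h1; cases h2; cases h3) auto

lemma grp_indecomposable:
  assumes p: "Factorial_Ring.prime p"
  shows "indecomposable (grp p a b)"
  unfolding indecomposable_def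
proof (intro conjI notI)
  have p1: "int p > 1" using p prime_gt_1_nat by simp
  assume "carrier (grp p a b) = {\<one>\<^bsub>grp p a b\<^esub>}"
  then have "cen p (wpt a b 0) = \<one>\<^bsub>grp p a b\<^esub>" using cen_carrier by blast
  then have "wpt a b 0 0 mod int p = 0" by (simp add: one_cen cen_eq)
  then show False using p1 by (simp add: wpt_def)
next
  assume "\<exists>H K. H \<lhd> grp p a b \<and> K \<lhd> grp p a b \<and> H \<inter> K = {\<one>\<^bsub>grp p a b\<^esub>} \<and>
      H <#>\<^bsub>grp p a b\<^esub> K = carrier (grp p a b) \<and> H \<noteq> {\<one>\<^bsub>grp p a b\<^esub>} \<and> K \<noteq> {\<one>\<^bsub>grp p a b\<^esub>}"
  then obtain H K where H: "H \<lhd> grp p a b" and K: "K \<lhd> grp p a b" and HK: "H \<inter> K = {\<one>\<^bsub>grp p a b\<^esub>}"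
    and HKc: "H <#>\<^bsub>grp p a b\<^esub> K = carrier (grp p a b)"
    and Hn: "H \<noteq> {\<one>\<^bsub>grp p a b\<^esub>}" and Kn: "K \<noteq> {\<one>\<^bsub>grp p a b\<^esub>}" by blast
  have Hs: "subgroup H (grp p a b)" and Ks: "subgroup K (grp p a b)"
    using H K normal_imp_subgroup by blast+
  have KH: "K \<inter> H = {\<one>\<^bsub>grp p a b\<^esub>}" using HK by blast
  have l: "lab 0 = 0" "lab 1 = 1" "lab 3 = 2" "lab 6 = 3" by (simp_all add: lab_def)
  have s0: "cen p (wpt a b 0) \<in> H \<or> cen p (wpt a b 0) \<in> K"
    using frame_split[OF p H K HKc, of 0] l by simp
  have s1: "cen p (wpt a b 1) \<in> H \<or> cen p (wpt a b 1) \<in> K"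
    using frame_split[OF p H K HKc, of 1] l by simp
  have s2: "cen p (wpt a b 2) \<in> H \<or> cen p (wpt a b 2) \<in> K"
    using frame_split[OF p H K HKc, of 3] l by simp
  have s3: "cen p (wpt a b 3) \<in> H \<or> cen p (wpt a b 3) \<in> K"
    using frame_split[OF p H K HKc, of 6] l by simp
  have nH: "\<not> (\<forall>u. cen p u \<in> H)" using central_all_contra[OF p H K HK _ Kn] by blast
  have nK: "\<not> (\<forall>u. cen p u \<in> K)" using central_all_contra[OF p K H KH _ Hn] by blast
  note tH = three_all[OF p Hs] and tK = three_all[OF p Ks]
  note pHK = pair_contra[OF p Hs Ks HK] and pKH = pair_contra[OF p Ks Hs KH]
  show False by (rule prop16[OF s0 s1 s2 s3 nH nK tH tK pHK pKH])
qed


theorem corollary4: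
  fixes p :: nat
  assumes "Factorial_Ring.prime p"
  shows "\<exists>Gs :: nat \<Rightarrow> nat monoid.
           (\<forall>i < p ^ 2. group (Gs i) \<and> order (Gs i) = p ^ 41 \<and>
                          metabelian (Gs i) \<and> indecomposable (Gs i)) \<and>
           (\<forall>i < p ^ 2. \<forall>j < p ^ 2. i \<noteq> j \<longrightarrow> \<not> (Gs i \<cong> Gs j))"
proof -
  have p: "Factorial_Ring.prime p" by fact
  have p0: "p > 0" using p prime_gt_0_nat by blast
  define Gs where "Gs i = grp p (int (i div p)) (int (i mod p))" for i
  have A: "\<forall>i < p ^ 2. group (Gs i) \<and> order (Gs i) = p ^ 41 \<and> metabelian (Gs i) \<and> indecomposable (Gs i)"
    unfolding Gs_def using grp_group grp_order[OF p0] grp_metabelian[OF p] grp_indecomposable[OF p] by blast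
  have B: "\<forall>i < p ^ 2. \<forall>j < p ^ 2. i \<noteq> j \<longrightarrow> \<not> (Gs i \<cong> Gs j)"
  proof (intro allI impI notI)
    fix i j assume i: "i < p ^ 2" and j: "j < p ^ 2" and ij: "i \<noteq> j" and iso: "Gs i \<cong> Gs j"
    then obtain \<phi> where phi: "\<phi> \<in> iso (Gs i) (Gs j)" unfolding is_iso_def by blast
    have id: "i div p < p" "j div p < p" using i j p0
      by (simp_all add: power2_eq_square less_mult_imp_div_less)
    have im: "i mod p < p" "j mod p < p" using p0 by simp_all
    have "int (i div p) = int (j div p) \<and> int (i mod p) = int (j mod p)"
      by (rule noniso[OF p _ _ _ _ _ _ _ _ phi[unfolded Gs_def]]) (use id im in simp_all)
    then have "i div p = j div p" "i mod p = j mod p" by simp_all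
    then have "i = j" by (metis div_mult_mod_eq)
    then show False using ij by blast
  qed
  show ?thesis using A B by blast
qed

end
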